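(* Let $p,q\in\mathbb R^3$ with $|p|\ge\frac32q^0$ and $\omega\in\mathbb S^2$. Then for any multi-index $\beta\in\mathbb N^3\setminus\{0\}$ (derivatives $\partial_\beta$ in $p$) there exists an integer $n=n(\beta)\ge1$ such that $$\frac{|\partial_\beta(v_\phi\chi_{A^c})|}{|v_\phi|}+|\partial_\beta p'|+|\partial_\beta q'|\lesssim\langle q\rangle^n.$$
   Context: $\mathfrak c\ge1$ is the speed of light; $p^0=\sqrt{\mathfrak c^2+|p|^2}$, $q^0=\sqrt{\mathfrak c^2+|q|^2}$, $\langle q\rangle=\sqrt{1+|q|^2}$; $\mathfrak s=2(p^0q^0-p\cdot q+\mathfrak c^2)$, $g=\sqrt{2(p^0q^0-p\cdot q-\mathfrak c^2)}$, $v_\phi=\frac{\mathfrak c}4\frac{g\sqrt{\mathfrak s}}{p^0q^0}$, $\gamma_0=(p^0+q^0)/\sqrt{\mathfrak s}$, and $p'=\frac12(p+q)+\frac12g\big(\omega+(\gamma_0-1)(p+q)\frac{(p+q)\cdot\omega}{|p+q|^2}\big)$, $q'=\frac12(p+q)-\frac12g\big(\omega+(\gamma_0-1)(p+q)\frac{(p+q)\cdot\omega}{|p+q|^2}\big)$. Let $\chi\in C_0^\infty([0,\infty))$ with $0\le\chi\le1$, $\chi(r)=1$ on $[0,1]$, $\chi(r)=0$ for $r>2$, and $\chi_{A^c}(p,q)=\big(1-\chi(\frac{p^0}{\mathfrak c})\big)\big(1-\chi(\frac23\frac{|p|}{q^0})\big)$. Implicit constants are independent of $\mathfrak c$, $p$,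 $q$, $\omega$. *)

theory Defs
  imports "HOL-Analysis.Analysis"
begin

type_synonym vec3 = "real ^ 3"

definition en :: "real \<Rightarrow> vec3 \<Rightarrow> real" where
  "en c p = sqrt (c^2 + (norm p)^2)"

definition jbr :: "vec3 \<Rightarrow> real" where
  "jbr q = sqrt (1 + (norm q)^2)"

definition sss :: "real \<Rightarrow> vec3 \<Rightarrow> vec3 \<Rightarrow> real" where
  "sss c p q = 2 * (en c p * en c q - p \<bullet> q + c^2)"

definition ggg :: "real \<Rightarrow> vec3 \<Rightarrow> vec3 \<Rightarrow> real" where
  "ggg c p q = sqrt (2 * (en c p * en c q - p \<bullet> q - c^2))"

definition vphi :: "real \<Rightarrow> vec3 \<Rightarrow> vec3 \<Rightarrow> real" where
  "vphi c p q = c / 4 * (ggg c p q * sqrt (sss c p q)) / (en c p * en c q)"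

definition gamma0 :: "real \<Rightarrow> vec3 \<Rightarrow> vec3 \<Rightarrow> real" where
  "gamma0 c p q = (en c p + en c q) / sqrt (sss c p q)"

definition dirv :: "real \<Rightarrow> vec3 \<Rightarrow> vec3 \<Rightarrow> vec3 \<Rightarrow> vec3" where
  "dirv c p q \<omega> = \<omega> + ((gamma0 c p q - 1) * ((p + q) \<bullet> \<omega>) / (norm (p + q))^2) *\<^sub>R (p + q)"

definition ppost :: "real \<Rightarrow> vec3 \<Rightarrow> vec3 \<Rightarrow> vec3 \<Rightarrow> vec3" where
  "ppost c p q \<omega> = (1/2) *\<^sub>R (p + q) + (ggg c p q / 2) *\<^sub>R dirv c p q \<omega>"

definition qpost :: "real \<Rightarrow> vec3 \<Rightarrow> vec3 \<Rightarrow> vec3 \<Rightarrow> vec3" where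
  "qpost c p q \<omega> = (1/2) *\<^sub>R (p + q) - (ggg c p q / 2) *\<^sub>R dirv c p q \<omega>"

definition chiAc :: "(real \<Rightarrow> real) \<Rightarrow> real \<Rightarrow> vec3 \<Rightarrow> vec3 \<Rightarrow> real" where
  "chiAc chi c p q = (1 - chi (en c p / c)) * (1 - chi (2/3 * norm p / en c q))"

definition pdiff :: "3 \<Rightarrow> (vec3 \<Rightarrow> 'a::real_normed_vector) \<Rightarrow> vec3 \<Rightarrow> 'a" where
  "pdiff i f = (\<lambda>p. vector_derivative (\<lambda>t. f (p + t *\<^sub>R axis i 1)) (at 0))"

definition pdiffs :: "(3 \<Rightarrow> nat) \<Rightarrow> (vec3 \<Rightarrow> 'a::real_normed_vector) \<Rightarrow> vec3 \<Rightarrow> 'a" where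
  "pdiffs \<beta> f = (pdiff 1 ^^ \<beta> 1) ((pdiff 2 ^^ \<beta> 2) ((pdiff 3 ^^ \<beta> 3) f))"

end

theory Submission
  imports Defs
begin
type_synonym fam = "real \<Rightarrow> vec3 \<Rightarrow> vec3 \<Rightarrow> vec3 \<Rightarrow> real"

definition inR :: "real \<Rightarrow> vec3 \<Rightarrow> vec3 \<Rightarrow> vec3 \<Rightarrow> bool" where
  "inR c q \<omega> p \<longleftrightarrow> 1 \<le> c \<and> norm \<omega> = 1 \<and> 4/3 * en c q < norm p"

definition bndf :: "fam \<Rightarrow> bool" where
  "bndf F \<longleftrightarrow> (\<exists>C>0. \<exists>n. \<forall>c q \<omega> p. inR c q \<omega> p \<longrightarrow> \<bar>F c q \<omega> p\<bar> \<le> C * jbr q ^ n)"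

definition lbnd :: "fam \<Rightarrow> bool" where
  "lbnd F \<longleftrightarrow> (\<exists>d>0. \<exists>n. \<forall>c q \<omega> p. inR c q \<omega> p \<longrightarrow> d / jbr q ^ n \<le> F c q \<omega> p)"

definition lined :: "fam \<Rightarrow> 3 \<Rightarrow> fam \<Rightarrow> bool" where
  "lined F i G \<longleftrightarrow> (\<forall>c q \<omega> p. inR c q \<omega> p \<longrightarrow>
     ((\<lambda>t. F c q \<omega> (p + t *\<^sub>R axis i 1)) has_real_derivative G c q \<omega> p / en c p) (at 0))"

coinductive S :: "fam \<Rightarrow> bool" where
  S_intro: "bndf F \<Longrightarrow> (\<forall>i. \<exists>G. S G \<and> lined F i G) \<Longrightarrow> S F"

definition chiok :: "(real \<Rightarrow> real) \<Rightarrow> bool" where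
  "chiok chi \<longleftrightarrow> (\<forall>k x. 0 < x \<longrightarrow> ((deriv ^^ k) chi) differentiable (at x)) \<and>
     (\<forall>k m. \<exists>B. \<forall>x>0. \<bar>(deriv ^^ k) chi x * x ^ m\<bar> \<le> B)"

inductive A :: "fam \<Rightarrow> bool" where
  A_S: "S F \<Longrightarrow> A F"
| A_const: "bndf (\<lambda>c q \<omega> p. k c q \<omega>) \<Longrightarrow> A (\<lambda>c q \<omega> p. k c q \<omega>)"
| A_add: "A F \<Longrightarrow> A G \<Longrightarrow> A (\<lambda>c q \<omega> p. F c q \<omega> p + G c q \<omega> p)"
| A_mult: "A F \<Longrightarrow> A G \<Longrightarrow> A (\<lambda>c q \<omega> p. F c q \<omega> p * G c q \<omega> p)"
| A_inv: "S F \<Longrightarrow> lbnd F \<Longrightarrow> A (\<lambda>c q \<omega> p. inverse (F c q \<omega> p))"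
| A_sqrt: "S F \<Longrightarrow> lbnd F \<Longrightarrow> A (\<lambda>c q \<omega> p. sqrt (F c q \<omega> p))"
| A_gen: "bndf (\<lambda>c q \<omega> p. K c q \<omega> * en c p powr e) \<Longrightarrow> A (\<lambda>c q \<omega> p. K c q \<omega> * en c p powr e)"
| A_u: "A (\<lambda>c q \<omega> p. p $ j / en c p)"
| A_chi: "chiok chi \<Longrightarrow> (\<forall>c q \<omega> p. inR c q \<omega> p \<longrightarrow> 0 < F c q \<omega> p) \<Longrightarrow>
    (\<forall>i. \<exists>D. S D \<and> lined F i (\<lambda>c q \<omega> p. F c q \<omega> p * D c q \<omega> p)) \<Longrightarrow>
    A (\<lambda>c q \<omega> p. (deriv ^^ k) chi (F c q \<omega> p) * F c q \<omega> p ^ m)"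

lemma jbr_ge1: "1 \<le> jbr q"
  unfolding jbr_def by simp

lemma en_pos: "1 \<le> c \<Longrightarrow> 0 < en c p"
  unfolding en_def by (simp add: add_pos_nonneg)

lemma en_ge: "1 \<le> c \<Longrightarrow> c \<le> en c p"
  unfolding en_def by (metis abs_of_nonneg add_increasing2 dual_order.trans le_add_same_cancel1
      norm_ge_zero real_sqrt_abs real_sqrt_le_mono zero_le_one zero_le_power2)

lemma en_ge_norm: "norm p \<le> en c p"
  unfolding en_def by (metis abs_norm_cancel add_increasing real_sqrt_abs real_sqrt_le_mono zero_le_power2 order_refl)

lemma en_sq: "en c p ^ 2 = c^2 + (norm p)^2"
  unfolding en_def by simp

lemma bndf_mono_n:
  assumes "\<forall>c q \<omega> p. inR c q \<omega> p \<longrightarrow> \<bar>F c q \<omega> p\<bar> \<le> C * jbr q ^ n" "n \<le> m" "0 \<le> C"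
  shows "\<forall>c q \<omega> p. inR c q \<omega> p \<longrightarrow> \<bar>F c q \<omega> p\<bar> \<le> C * jbr q ^ m"
proof (intro allI impI)
  fix c q \<omega> p assume "inR c q \<omega> p"
  have "jbr q ^ n \<le> jbr q ^ m" using jbr_ge1 assms(2) by (simp add: power_increasing)
  thus "\<bar>F c q \<omega> p\<bar> \<le> C * jbr q ^ m"
    using assms(1) \<open>inR c q \<omega> p\<close> assms(3) by (meson mult_left_mono order_trans)
qed

lemma bndf_add: "bndf F \<Longrightarrow> bndf G \<Longrightarrow> bndf (\<lambda>c q \<omega> p. F c q \<omega> p + G c q \<omega> p)"
proof -
  assume "bndf F" "bndf G"
  then obtain C1 n1 C2 n2 where c1: "C1 > 0" "\<forall>c q \<omega> p. inR c q \<omega> p \<longrightarrow> \<bar>F c q \<omega> p\<bar> \<le> C1 * jbr q ^ n1"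
    and c2: "C2 > 0" "\<forall>c q \<omega> p. inR c q \<omega> p \<longrightarrow> \<bar>G c q \<omega> p\<bar> \<le> C2 * jbr q ^ n2"
    unfolding bndf_def by blast
  have a: "\<forall>c q \<omega> p. inR c q \<omega> p \<longrightarrow> \<bar>F c q \<omega> p\<bar> \<le> C1 * jbr q ^ (n1+n2)"
    by (rule bndf_mono_n[OF c1(2)]) (use c1 in auto)
  have b: "\<forall>c q \<omega> p. inR c q \<omega> p \<longrightarrow> \<bar>G c q \<omega> p\<bar> \<le> C2 * jbr q ^ (n1+n2)"
    by (rule bndf_mono_n[OF c2(2)]) (use c2 in auto)
  show ?thesis unfolding bndf_def
    by (rule exI[of _ "C1+C2"], use c1 c2 a b in \<open>auto intro!: exI[of _ "n1+n2"] simp: distrib_right\<close>)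
       (smt (verit) a b)
qed

lemma bndf_mult: "bndf F \<Longrightarrow> bndf G \<Longrightarrow> bndf (\<lambda>c q \<omega> p. F c q \<omega> p * G c q \<omega> p)"
proof -
  assume "bndf F" "bndf G"
  then obtain C1 n1 C2 n2 where c1: "C1 > 0" "\<forall>c q \<omega> p. inR c q \<omega> p \<longrightarrow> \<bar>F c q \<omega> p\<bar> \<le> C1 * jbr q ^ n1"
    and c2: "C2 > 0" "\<forall>c q \<omega> p. inR c q \<omega> p \<longrightarrow> \<bar>G c q \<omega> p\<bar> \<le> C2 * jbr q ^ n2"
    unfolding bndf_def by blast
  have "\<forall>c q \<omega> p. inR c q \<omega> p \<longrightarrow> \<bar>F c q \<omega> p * G c q \<omega> p\<bar> \<le> (C1*C2) * jbr q ^ (n1+n2)"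
  proof (intro allI impI)
    fix c q \<omega> p assume r: "inR c q \<omega> p"
    have "\<bar>F c q \<omega> p * G c q \<omega> p\<bar> = \<bar>F c q \<omega> p\<bar> * \<bar>G c q \<omega> p\<bar>" by (simp add: abs_mult)
    also have "\<dots> \<le> (C1 * jbr q ^ n1) * (C2 * jbr q ^ n2)"
      using c1 c2 r jbr_ge1[of q] by (intro mult_mono) (auto intro!: mult_nonneg_nonneg)
    also have "\<dots> = (C1*C2) * jbr q ^ (n1+n2)" by (simp add: power_add)
    finally show "\<bar>F c q \<omega> p * G c q \<omega> p\<bar> \<le> (C1*C2) * jbr q ^ (n1+n2)" .
  qed
  thus ?thesis unfolding bndf_def using c1 c2 by (intro exI[of _ "C1*C2"]) auto
qed

lemma bndf_const: "(\<forall>c q \<omega> p. inR c q \<omega> p \<longrightarrow> \<bar>F c q \<omega> p\<bar> \<le> C) \<Longrightarrow> bndf F"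
  unfolding bndf_def
  by (intro exI[of _ "max C 1"] conjI exI[of _ 0]) (auto, meson max.coboundedI1)

lemma line0: "(p::vec3) + (0::real) *\<^sub>R v = p" by simp

lemma normsq_line: "norm (p + t *\<^sub>R axis i (1::real))^2 = norm p ^ 2 + 2 * t * p $ i + t^2"
proof -
  have "norm (p + t *\<^sub>R axis i (1::real))^2 = (p + t *\<^sub>R axis i 1) \<bullet> (p + t *\<^sub>R axis i 1)"
    by (simp add: power2_norm_eq_inner)
  also have "\<dots> = p \<bullet> p + 2 * t * (p \<bullet> axis i 1) + t^2 * (axis i 1 \<bullet> axis i (1::real))"
    by (simp add: inner_add_left inner_add_right inner_commute algebra_simps power2_eq_square)
  also have "\<dots> = norm p ^ 2 + 2 * t * p $ i + t^2"
    by (simp add: inner_axis power2_norm_eq_inner inner_axis_axis)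
  finally show ?thesis .
qed

lemma LD_normsq: "((\<lambda>t. norm (p + t *\<^sub>R axis i 1)^2) has_real_derivative 2 * p $ i) (at 0)"
  unfolding normsq_line
  by (auto intro!: derivative_eq_intros)

lemma LD_en:
  assumes "1 \<le> c"
  shows "((\<lambda>t. en c (p + t *\<^sub>R axis i 1)) has_real_derivative p $ i / en c p) (at 0)"
proof -
  have pos: "0 < c^2 + norm p ^ 2" using assms by (simp add: add_pos_nonneg)
  have "((\<lambda>t. sqrt (c^2 + norm (p + t *\<^sub>R axis i 1)^2)) has_real_derivative
        inverse (sqrt (c^2 + norm p ^2)) / 2 * (0 + 2 * p $ i)) (at 0)"
    apply (rule DERIV_chain2[where g="\<lambda>t. c^2 + norm (p + t *\<^sub>R axis i 1)^2"])
     apply (simp only: scale_zero_left add_0_right) apply (rule DERIV_real_sqrt) using pos apply simp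
    by (intro DERIV_add DERIV_const LD_normsq)
  thus ?thesis unfolding en_def by (simp add: divide_simps)
qed

lemma LD_powr:
  assumes "1 \<le> c"
  shows "((\<lambda>t. K * en c (p + t *\<^sub>R axis i 1) powr e) has_real_derivative
           (e * (K * en c p powr e) * (p $ i / en c p)) / en c p) (at 0)"
proof -
  have P: "0 < en c p" using en_pos[OF assms] .
  have "((\<lambda>t. en c (p + t *\<^sub>R axis i 1) powr e) has_real_derivative
          e * en c p powr (e - of_nat 1) * (p $ i / en c p)) (at 0)"
    using DERIV_fun_powr[OF LD_en[OF assms, of p i], of e] P by simp
  from DERIV_cmult[OF this, of K]
  show ?thesis using P by (simp add: powr_diff field_simps)
qed

lemma LD_u:
  assumes "1 \<le> c"
  shows "((\<lambda>t. (p + t *\<^sub>R axis i 1) $ j / en c (p + t *\<^sub>R axis i 1)) has_real_derivative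
           ((if i = j then 1 else 0) + (-1) * ((p $ i / en c p) * (p $ j / en c p))) / en c p) (at 0)"
proof -
  have P: "0 < en c p" using en_pos[OF assms] .
  have lin: "((\<lambda>t. (p + t *\<^sub>R axis i 1) $ j) has_real_derivative (if i = j then 1 else 0)) (at 0)"
  proof -
    have "(\<lambda>t. (p + t *\<^sub>R axis i 1) $ j) = (\<lambda>t. p $ j + t * (if i = j then 1 else 0))"
      by (auto simp: axis_def)
    thus ?thesis by (auto intro!: derivative_eq_intros)
  qed
  have "((\<lambda>t. (p + t *\<^sub>R axis i 1) $ j * inverse (en c (p + t *\<^sub>R axis i 1))) has_real_derivative
          (if i = j then 1 else 0) * inverse (en c p) + (- (p $ i / en c p * inverse (en c p ^ Suc (Suc 0)))) * p $ j) (at 0)"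
    using DERIV_mult[OF lin DERIV_inverse_fun[OF LD_en[OF assms, of p i]]] P by simp
  thus ?thesis using P by (simp add: divide_inverse[symmetric] field_simps power2_eq_square)
qed

lemma LD_norm:
  assumes "p \<noteq> 0"
  shows "((\<lambda>t. norm (p + t *\<^sub>R axis i 1)) has_real_derivative p $ i / norm p) (at 0)"
proof -
  have pos: "0 < norm p ^ 2" using assms by simp
  have "((\<lambda>t. sqrt (norm (p + t *\<^sub>R axis i 1)^2)) has_real_derivative
        inverse (sqrt (norm p ^2)) / 2 * (2 * p $ i)) (at 0)"
    apply (rule DERIV_chain2[where g="\<lambda>t. norm (p + t *\<^sub>R axis i 1)^2"])
     apply (simp only: scale_zero_left add_0_right) apply (rule DERIV_real_sqrt) using pos apply simp
    by (rule LD_normsq)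
  thus ?thesis by (simp add: divide_simps)
qed

lemma inR_c: "inR c q \<omega> p \<Longrightarrow> 1 \<le> c" by (simp add: inR_def)
lemma inR_P: "inR c q \<omega> p \<Longrightarrow> 0 < en c p" using en_pos inR_c by blast

lemma lbnd_pos: "lbnd F \<Longrightarrow> inR c q \<omega> p \<Longrightarrow> 0 < F c q \<omega> p"
  unfolding lbnd_def
  by (meson jbr_ge1 divide_pos_pos less_le_trans zero_less_one order_less_le_trans zero_less_power)

lemma bndf_inv: "lbnd F \<Longrightarrow> bndf (\<lambda>c q \<omega> p. inverse (F c q \<omega> p))"
proof -
  assume l: "lbnd F"
  then obtain d n where d: "d > 0" "\<forall>c q \<omega> p. inR c q \<omega> p \<longrightarrow> d / jbr q ^ n \<le> F c q \<omega> p"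
    unfolding lbnd_def by blast
  have "\<forall>c q \<omega> p. inR c q \<omega> p \<longrightarrow> \<bar>inverse (F c q \<omega> p)\<bar> \<le> (1/d) * jbr q ^ n"
  proof (intro allI impI)
    fix c q \<omega> p assume r: "inR c q \<omega> p"
    have j: "0 < jbr q ^ n" using jbr_ge1[of q] by simp
    have pos: "0 < d / jbr q ^ n" using d j by simp
    have "\<bar>inverse (F c q \<omega> p)\<bar> = inverse (F c q \<omega> p)" using lbnd_pos[OF l r] by simp
    also have "\<dots> \<le> inverse (d / jbr q ^ n)" using d r pos by (intro le_imp_inverse_le) auto
    also have "\<dots> = (1/d) * jbr q ^ n" by simp
    finally show "\<bar>inverse (F c q \<omega> p)\<bar> \<le> (1/d) * jbr q ^ n" .
  qed
  thus ?thesis unfolding bndf_def using d by (intro exI[of _ "1/d"]) auto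
qed

lemma bndf_sqrt: "bndf F \<Longrightarrow> bndf (\<lambda>c q \<omega> p. sqrt (F c q \<omega> p))"
proof -
  assume "bndf F"
  then obtain C n where C: "C > 0" "\<forall>c q \<omega> p. inR c q \<omega> p \<longrightarrow> \<bar>F c q \<omega> p\<bar> \<le> C * jbr q ^ n"
    unfolding bndf_def by blast
  have "\<forall>c q \<omega> p. inR c q \<omega> p \<longrightarrow> \<bar>sqrt (F c q \<omega> p)\<bar> \<le> (1 + C) * jbr q ^ n"
  proof (intro allI impI)
    fix c q \<omega> p assume r: "inR c q \<omega> p"
    have j: "1 \<le> jbr q ^ n" using jbr_ge1[of q] by simp
    have "\<bar>sqrt (F c q \<omega> p)\<bar> = sqrt \<bar>F c q \<omega> p\<bar>"
      by (cases "0 \<le> F c q \<omega> p") (auto simp: real_sqrt_minus[symmetric])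
    also have "\<dots> \<le> 1 + \<bar>F c q \<omega> p\<bar>"
    proof -
      let ?a = "\<bar>F c q \<omega> p\<bar>"
      have "0 \<le> ?a * ?a" by simp
      hence "?a \<le> (1 + ?a)^2" by (simp add: power2_eq_square algebra_simps)
      hence "sqrt ?a \<le> sqrt ((1 + ?a)^2)" by (rule real_sqrt_le_mono)
      thus ?thesis by simp
    qed
    also have "\<dots> \<le> jbr q ^ n + C * jbr q ^ n" using C r j by force
    finally show "\<bar>sqrt (F c q \<omega> p)\<bar> \<le> (1 + C) * jbr q ^ n" by (simp add: distrib_right)
  qed
  thus ?thesis unfolding bndf_def using C by (intro exI[of _ "1+C"]) auto
qed

lemma S_bndf: "S F \<Longrightarrow> bndf F" by (erule S.cases) auto
lemma S_lined: "S F \<Longrightarrow> \<exists>G. S G \<and> lined F i G" by (erule S.cases) auto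

lemma chi_val: "P \<noteq> 0 \<Longrightarrow> a*(x*Dv/P)*x^m + real m*(x*Dv/P*x^(m - Suc 0))*b = ((a*x^Suc m + real m*(b*x^m))*Dv)/(P::real)"
  by (cases m) (simp_all add: field_simps)

lemma A_props: "A F \<Longrightarrow> bndf F \<and> (\<forall>i. \<exists>G. A G \<and> lined F i G)"
proof (induction rule: A.induct)
  case (A_S F)
  then show ?case using S_bndf S_lined A.A_S by blast
next
  case (A_const k)
  have "A (\<lambda>c q \<omega> p. 0)" by (rule A.A_const) (rule bndf_const[of _ 0], simp)
  moreover have "lined (\<lambda>c q \<omega> p. k c q \<omega>) i (\<lambda>c q \<omega> p. 0)" for i
    unfolding lined_def by simp
  ultimately show ?case using A_const by blast
next
  case (A_add F G)
  show ?case
  proof (intro conjI allI)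
    show "bndf (\<lambda>c q \<omega> p. F c q \<omega> p + G c q \<omega> p)" using A_add bndf_add by blast
    fix i
    obtain F' G' where f: "A F'" "lined F i F'" and g: "A G'" "lined G i G'" using A_add by blast
    have "lined (\<lambda>c q \<omega> p. F c q \<omega> p + G c q \<omega> p) i (\<lambda>c q \<omega> p. F' c q \<omega> p + G' c q \<omega> p)"
      using f(2) g(2) unfolding lined_def by (auto simp: add_divide_distrib intro!: DERIV_add)
    thus "\<exists>H. A H \<and> lined (\<lambda>c q \<omega> p. F c q \<omega> p + G c q \<omega> p) i H" using f g A.A_add by blast
  qed
next
  case (A_mult F G)
  show ?case
  proof (intro conjI allI)
    show "bndf (\<lambda>c q \<omega> p. F c q \<omega> p * G c q \<omega> p)" using A_mult bndf_mult by blast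
    fix i
    obtain F' G' where f: "A F'" "lined F i F'" and g: "A G'" "lined G i G'" using A_mult by blast
    have "lined (\<lambda>c q \<omega> p. F c q \<omega> p * G c q \<omega> p) i
            (\<lambda>c q \<omega> p. F' c q \<omega> p * G c q \<omega> p + F c q \<omega> p * G' c q \<omega> p)"
      unfolding lined_def
    proof (intro allI impI)
      fix c q \<omega> p assume r: "inR c q \<omega> p"
      show "((\<lambda>t. F c q \<omega> (p + t *\<^sub>R axis i 1) * G c q \<omega> (p + t *\<^sub>R axis i 1)) has_real_derivative
          (F' c q \<omega> p * G c q \<omega> p + F c q \<omega> p * G' c q \<omega> p) / en c p) (at 0)"
        using DERIV_mult[OF f(2)[unfolded lined_def, rule_format, OF r] g(2)[unfolded lined_def, rule_format, OF r]]
        by (simp add: add_divide_distrib mult.commute)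
    qed
    moreover have "A (\<lambda>c q \<omega> p. F' c q \<omega> p * G c q \<omega> p + F c q \<omega> p * G' c q \<omega> p)"
      using f g A_mult by (intro A.A_add A.A_mult) auto
    ultimately show "\<exists>H. A H \<and> lined (\<lambda>c q \<omega> p. F c q \<omega> p * G c q \<omega> p) i H" by blast
  qed
next
  case (A_inv F)
  show ?case
  proof (intro conjI allI)
    show "bndf (\<lambda>c q \<omega> p. inverse (F c q \<omega> p))" using A_inv bndf_inv by blast
    fix i
    obtain D where D: "S D" "lined F i D" using A_inv S_lined by blast
    let ?H = "\<lambda>c q \<omega> p. (-1) * (inverse (F c q \<omega> p) * (inverse (F c q \<omega> p) * D c q \<omega> p))"
    have "A ?H" using A_inv D
      by (intro A.A_mult A.A_const A.A_inv A.A_S) (auto intro: bndf_const[of _ 1])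
    moreover have "lined (\<lambda>c q \<omega> p. inverse (F c q \<omega> p)) i ?H"
      unfolding lined_def
    proof (intro allI impI)
      fix c q \<omega> p assume r: "inR c q \<omega> p"
      have ne: "F c q \<omega> p \<noteq> 0" using lbnd_pos[OF A_inv(2) r] by simp
      show "((\<lambda>t. inverse (F c q \<omega> (p + t *\<^sub>R axis i 1))) has_real_derivative ?H c q \<omega> p / en c p) (at 0)"
        using DERIV_inverse_fun[OF D(2)[unfolded lined_def, rule_format, OF r]] ne
        by (simp add: field_simps power2_eq_square)
    qed
    ultimately show "\<exists>H. A H \<and> lined (\<lambda>c q \<omega> p. inverse (F c q \<omega> p)) i H" by blast
  qed
next
  case (A_sqrt F)
  show ?case
  proof (intro conjI allI)
    show "bndf (\<lambda>c q \<omega> p. sqrt (F c q \<omega> p))" using A_sqrt bndf_sqrt S_bndf by blast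
    fix i
    obtain D where D: "S D" "lined F i D" using A_sqrt S_lined by blast
    let ?H = "\<lambda>c q \<omega> p. (1/2) * (sqrt (F c q \<omega> p) * (inverse (F c q \<omega> p) * D c q \<omega> p))"
    have "A ?H" using A_sqrt D
      by (intro A.A_mult A.A_const A.A_inv A.A_S A.A_sqrt) (auto intro: bndf_const[of _ 1])
    moreover have "lined (\<lambda>c q \<omega> p. sqrt (F c q \<omega> p)) i ?H"
      unfolding lined_def
    proof (intro allI impI)
      fix c q \<omega> p assume r: "inR c q \<omega> p"
      have pos: "0 < F c q \<omega> p" using lbnd_pos[OF A_sqrt(2) r] by simp
      have dd: "((\<lambda>t. sqrt (F c q \<omega> (p + t *\<^sub>R axis i 1))) has_real_derivative
          inverse (sqrt (F c q \<omega> p)) / 2 * (D c q \<omega> p / en c p)) (at 0)"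
        apply (rule DERIV_chain2[where g="\<lambda>t. F c q \<omega> (p + t *\<^sub>R axis i 1)"])
         apply (simp only: scale_zero_left add_0_right) apply (rule DERIV_real_sqrt) using pos apply simp
        using D(2)[unfolded lined_def, rule_format, OF r] .
      have vv: "inverse (sqrt (F c q \<omega> p)) / 2 * (D c q \<omega> p / en c p) = ?H c q \<omega> p / en c p"
      proof -
        have s: "sqrt (F c q \<omega> p) * sqrt (F c q \<omega> p) = F c q \<omega> p" using pos by simp
        have "inverse (sqrt (F c q \<omega> p)) = sqrt (F c q \<omega> p) * inverse (F c q \<omega> p)"
          using s pos by (simp add: field_simps)
        moreover have gen: "\<And>a b D P::real. (a*b)/2*(D/P) = 1/2*(a*(b*D))/P" by simp
        ultimately show ?thesis by (simp only:)
      qed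
      show "((\<lambda>t. sqrt (F c q \<omega> (p + t *\<^sub>R axis i 1))) has_real_derivative ?H c q \<omega> p / en c p) (at 0)"
        using dd unfolding vv .
    qed
    ultimately show "\<exists>H. A H \<and> lined (\<lambda>c q \<omega> p. sqrt (F c q \<omega> p)) i H" by blast
  qed
next
  case (A_gen K e)
  show ?case
  proof (intro conjI allI)
    show "bndf (\<lambda>c q \<omega> p. K c q \<omega> * en c p powr e)" using A_gen by blast
    fix i
    let ?H = "\<lambda>c q \<omega> p. e * ((K c q \<omega> * en c p powr e) * (p $ i / en c p))"
    have "A ?H" using A_gen
      by (intro A.A_mult A.A_const A.A_gen A.A_u) (auto intro: bndf_const[of _ "\<bar>e\<bar>"])
    moreover have "lined (\<lambda>c q \<omega> p. K c q \<omega> * en c p powr e) i ?H"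
      unfolding lined_def using LD_powr inR_c by (simp add: mult.assoc)
    ultimately show "\<exists>H. A H \<and> lined (\<lambda>c q \<omega> p. K c q \<omega> * en c p powr e) i H" by blast
  qed
next
  case (A_u j)
  show ?case
  proof (intro conjI allI)
    show "bndf (\<lambda>c q \<omega> p. p $ j / en c p)"
    proof (rule bndf_const[of _ 1], intro allI impI)
      fix c q \<omega> p assume r: "inR c q \<omega> p"
      have "\<bar>p $ j\<bar> \<le> en c p" using component_le_norm_cart[of p j] en_ge_norm[of p c] by linarith
      thus "\<bar>p $ j / en c p\<bar> \<le> 1" using inR_P[OF r] by (simp add: abs_divide divide_le_eq_1)
    qed
    fix i
    let ?H = "\<lambda>c q \<omega> p. (if i = j then 1 else 0) + (-1) * ((p $ i / en c p) * (p $ j / en c p))"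
    have "A ?H"
      by (intro A.A_mult A.A_const A.A_u A.A_add) (auto intro: bndf_const[of _ 1])
    moreover have "lined (\<lambda>c q \<omega> p. p $ j / en c p) i ?H"
      unfolding lined_def using LD_u inR_c by blast
    ultimately show "\<exists>H. A H \<and> lined (\<lambda>c q \<omega> p. p $ j / en c p) i H" by blast
  qed
next
  case (A_chi chi F k m)
  show ?case
  proof (intro conjI allI)
    obtain B where B: "\<forall>x>0. \<bar>(deriv ^^ k) chi x * x ^ m\<bar> \<le> B" using A_chi(1) unfolding chiok_def by blast
    show "bndf (\<lambda>c q \<omega> p. (deriv ^^ k) chi (F c q \<omega> p) * F c q \<omega> p ^ m)"
      by (rule bndf_const[of _ B]) (use B A_chi(2) in auto)
    fix i
    obtain D where D: "S D" "lined F i (\<lambda>c q \<omega> p. F c q \<omega> p * D c q \<omega> p)" using A_chi(3) by blast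
    let ?H = "\<lambda>c q \<omega> p. ((deriv ^^ Suc k) chi (F c q \<omega> p) * F c q \<omega> p ^ Suc m +
                 real m * ((deriv ^^ k) chi (F c q \<omega> p) * F c q \<omega> p ^ m)) * D c q \<omega> p"
    have "A ?H" using A_chi D
      by (intro A.A_mult A.A_add A.A_const A.A_chi A.A_S) (auto intro: bndf_const[of _ "real m"])
    moreover have "lined (\<lambda>c q \<omega> p. (deriv ^^ k) chi (F c q \<omega> p) * F c q \<omega> p ^ m) i ?H"
      unfolding lined_def
    proof (intro allI impI)
      fix c q \<omega> p assume r: "inR c q \<omega> p"
      let ?x = "F c q \<omega> p"
      have pos: "0 < ?x" using A_chi(2) r by blast
      have dF: "((\<lambda>t. F c q \<omega> (p + t *\<^sub>R axis i 1)) has_real_derivative ?x * D c q \<omega> p / en c p) (at 0)"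
        using D(2)[unfolded lined_def, rule_format, OF r] .
      have dk: "((deriv ^^ k) chi has_real_derivative (deriv ^^ Suc k) chi ?x) (at ?x)"
        using A_chi(1) pos unfolding chiok_def by (simp add: DERIV_deriv_iff_real_differentiable)
      have d1: "((\<lambda>t. (deriv ^^ k) chi (F c q \<omega> (p + t *\<^sub>R axis i 1))) has_real_derivative
          (deriv ^^ Suc k) chi ?x * (?x * D c q \<omega> p / en c p)) (at 0)"
        apply (rule DERIV_chain2[where g="\<lambda>t. F c q \<omega> (p + t *\<^sub>R axis i 1)"])
         apply (simp only: scale_zero_left add_0_right) apply (rule dk)
        by (rule dF)
      have d2: "((\<lambda>t. F c q \<omega> (p + t *\<^sub>R axis i 1) ^ m) has_real_derivative
          real m * (?x * D c q \<omega> p / en c p * ?x ^ (m - Suc 0))) (at 0)"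
        using DERIV_power[OF dF, of m] by simp
      have eq: "real m * (?x * ?x ^ (m - Suc 0)) = real m * ?x ^ m"
        by (cases m) auto
      have dm: "((\<lambda>t. (deriv ^^ k) chi (F c q \<omega> (p + t *\<^sub>R axis i 1)) * F c q \<omega> (p + t *\<^sub>R axis i 1) ^ m)
          has_real_derivative (deriv ^^ Suc k) chi ?x * (?x * D c q \<omega> p / en c p) * ?x ^ m +
          real m * (?x * D c q \<omega> p / en c p * ?x ^ (m - Suc 0)) * (deriv ^^ k) chi ?x) (at 0)"
        using DERIV_mult[OF d1 d2] by (simp only: scale_zero_left add_0_right)
      have vv: "(deriv ^^ Suc k) chi ?x * (?x * D c q \<omega> p / en c p) * ?x ^ m +
          real m * (?x * D c q \<omega> p / en c p * ?x ^ (m - Suc 0)) * (deriv ^^ k) chi ?x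
          = ?H c q \<omega> p / en c p"
        by (rule chi_val) (use inR_P[OF r] in simp)
      show "((\<lambda>t. (deriv ^^ k) chi (F c q \<omega> (p + t *\<^sub>R axis i 1)) * F c q \<omega> (p + t *\<^sub>R axis i 1) ^ m)
          has_real_derivative ?H c q \<omega> p / en c p) (at 0)"
        using dm unfolding vv .
    qed
    ultimately show "\<exists>H. A H \<and> lined (\<lambda>c q \<omega> p. (deriv ^^ k) chi (F c q \<omega> p) * F c q \<omega> p ^ m) i H"
      by blast
  qed
qed

lemma A_imp_S: "A F \<Longrightarrow> S F"
proof (coinduction arbitrary: F rule: S.coinduct)
  case (S F)
  thus ?case using A_props by blast
qed

lemma S_const: "(\<forall>c q \<omega> p. inR c q \<omega> p \<longrightarrow> \<bar>k c q \<omega>\<bar> \<le> C * jbr q ^ n) \<Longrightarrow> S (\<lambda>c q \<omega> p. k c q \<omega>)"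
proof -
  assume h: "\<forall>c q \<omega> p. inR c q \<omega> p \<longrightarrow> \<bar>k c q \<omega>\<bar> \<le> C * jbr q ^ n"
  have "bndf (\<lambda>c q \<omega> p. k c q \<omega>)" unfolding bndf_def
  proof (intro exI[of _ "max C 1"] conjI exI[of _ n] allI impI)
    fix c q \<omega> p assume "inR c q \<omega> p"
    hence "\<bar>k c q \<omega>\<bar> \<le> C * jbr q ^ n" using h by blast
    also have "\<dots> \<le> max C 1 * jbr q ^ n" using jbr_ge1[of q] by (intro mult_right_mono) auto
    finally show "\<bar>k c q \<omega>\<bar> \<le> max C 1 * jbr q ^ n" .
  qed simp
  from this show ?thesis by (rule A_imp_S[OF A.A_const])
qed

lemma S_constb: "(\<forall>c q \<omega> p. inR c q \<omega> p \<longrightarrow> \<bar>k c q \<omega>\<bar> \<le> C) \<Longrightarrow> S (\<lambda>c q \<omega> p. k c q \<omega>)"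
  by (rule S_const[where n=0]) simp

lemma S_num: "S (\<lambda>c q \<omega> p. a)"
  by (rule S_constb[where C="\<bar>a\<bar>"]) simp

lemma S_add: "S F \<Longrightarrow> S G \<Longrightarrow> S (\<lambda>c q \<omega> p. F c q \<omega> p + G c q \<omega> p)"
  by (rule A_imp_S, rule A.A_add; rule A.A_S)
lemma S_mult: "S F \<Longrightarrow> S G \<Longrightarrow> S (\<lambda>c q \<omega> p. F c q \<omega> p * G c q \<omega> p)"
  by (rule A_imp_S, rule A.A_mult; rule A.A_S)
lemma S_inv: "S F \<Longrightarrow> lbnd F \<Longrightarrow> S (\<lambda>c q \<omega> p. inverse (F c q \<omega> p))"
  by (rule A_imp_S, rule A.A_inv)
lemma S_sqrt: "S F \<Longrightarrow> lbnd F \<Longrightarrow> S (\<lambda>c q \<omega> p. sqrt (F c q \<omega> p))"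
  by (rule A_imp_S, rule A.A_sqrt)
lemma S_gen: "bndf (\<lambda>c q \<omega> p. K c q \<omega> * en c p powr e) \<Longrightarrow> S (\<lambda>c q \<omega> p. K c q \<omega> * en c p powr e)"
  by (rule A_imp_S, rule A.A_gen)
lemma S_u: "S (\<lambda>c q \<omega> p. p $ j / en c p)"
  by (rule A_imp_S, rule A.A_u)
lemma S_chi: "chiok chi \<Longrightarrow> (\<forall>c q \<omega> p. inR c q \<omega> p \<longrightarrow> 0 < F c q \<omega> p) \<Longrightarrow>
    (\<forall>i. \<exists>D. S D \<and> lined F i (\<lambda>c q \<omega> p. F c q \<omega> p * D c q \<omega> p)) \<Longrightarrow>
    S (\<lambda>c q \<omega> p. (deriv ^^ k) chi (F c q \<omega> p) * F c q \<omega> p ^ m)"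
  by (rule A_imp_S, rule A.A_chi)

lemma S_neg: "S F \<Longrightarrow> S (\<lambda>c q \<omega> p. - F c q \<omega> p)"
  using S_mult[OF S_num[of "-1"]] by simp
lemma S_diff: "S F \<Longrightarrow> S G \<Longrightarrow> S (\<lambda>c q \<omega> p. F c q \<omega> p - G c q \<omega> p)"
  using S_add[OF _ S_neg] by simp

lemma S_sum: "(\<And>j. S (F j)) \<Longrightarrow> S (\<lambda>c q \<omega> p. \<Sum>j\<in>(I::'b set). F j c q \<omega> p)"
proof (induction I rule: infinite_finite_induct)
  case (infinite A) then show ?case by (simp add: S_num)
next
  case empty then show ?case by (simp add: S_num)
next
  case (insert x F) then show ?case by (simp add: S_add)
qed

lemma open_line: "open {t::real. a < norm (p + t *\<^sub>R v)}"
  by (rule open_Collect_less) (auto intro!: continuous_intros)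

lemma lined_cong_pt:
  assumes r: "inR c q \<omega> p" and eq: "\<forall>p'. inR c q \<omega> p' \<longrightarrow> f p' = g p'"
    and d: "((\<lambda>t. f (p + t *\<^sub>R axis i 1)) has_real_derivative D) (at 0)"
  shows "((\<lambda>t. g (p + t *\<^sub>R axis i 1)) has_real_derivative D) (at 0)"
proof (rule has_field_derivative_transform_within_open[OF d open_line])
  show "0 \<in> {t. 4/3 * en c q < norm (p + t *\<^sub>R axis i 1)}" using r by (simp add: inR_def)
  fix t assume "t \<in> {t. 4/3 * en c q < norm (p + t *\<^sub>R axis i 1)}"
  hence "inR c q \<omega> (p + t *\<^sub>R axis i 1)" using r by (simp add: inR_def)
  thus "f (p + t *\<^sub>R axis i 1) = g (p + t *\<^sub>R axis i 1)" using eq by blast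
qed

lemma S_cong:
  assumes "S F" "\<forall>c q \<omega> p. inR c q \<omega> p \<longrightarrow> F c q \<omega> p = G c q \<omega> p"
  shows "S G"
proof -
  have "\<exists>F. S F \<and> (\<forall>c q \<omega> p. inR c q \<omega> p \<longrightarrow> F c q \<omega> p = G c q \<omega> p)" using assms by blast
  thus ?thesis
  proof (coinduct rule: S.coinduct)
    case (S G)
    then obtain F where F: "S F" "\<forall>c q \<omega> p. inR c q \<omega> p \<longrightarrow> F c q \<omega> p = G c q \<omega> p" by blast
    have b: "bndf G"
    proof -
      obtain C n where "C > 0" "\<forall>c q \<omega> p. inR c q \<omega> p \<longrightarrow> \<bar>F c q \<omega> p\<bar> \<le> C * jbr q ^ n"
        using S_bndf[OF F(1)] unfolding bndf_def by blast
      thus ?thesis unfolding bndf_def using F(2) by (intro exI[of _ C] conjI exI[of _ n]) auto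
    qed
    have l: "\<exists>H. ((\<exists>F. S F \<and> (\<forall>c q \<omega> p. inR c q \<omega> p \<longrightarrow> F c q \<omega> p = H c q \<omega> p)) \<or> S H) \<and> lined G i H" for i
    proof -
      obtain H where H: "S H" "lined F i H" using S_lined[OF F(1), of i] by (elim exE conjE)
      have "lined G i H" unfolding lined_def
      proof (intro allI impI)
        fix c q \<omega> p assume r: "inR c q \<omega> p"
        have e: "\<forall>p'. inR c q \<omega> p' \<longrightarrow> F c q \<omega> p' = G c q \<omega> p'" using F(2) by blast
        show "((\<lambda>t. G c q \<omega> (p + t *\<^sub>R axis i 1)) has_real_derivative H c q \<omega> p / en c p) (at 0)"
          by (rule lined_cong_pt[OF r e H(2)[unfolded lined_def, rule_format, OF r]])
      qed
      thus ?thesis using H(1) by blast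
    qed
    show ?case using b l by blast
  qed
qed

lemma S_invP: "S (\<lambda>c q \<omega> p. 1 / en c p)"
proof (rule S_cong[OF S_gen[where K="\<lambda>c q \<omega>. 1" and e="-1"]])
  show "bndf (\<lambda>c q \<omega> p. 1 * en c p powr - 1)"
  proof (rule bndf_const[of _ 1], intro allI impI)
    fix c q \<omega> p assume r: "inR c q \<omega> p"
    have "1 \<le> en c p" using en_ge[OF inR_c[OF r], of p] inR_c[OF r] by linarith
    thus "\<bar>1 * en c p powr - 1\<bar> \<le> 1" using inR_P[OF r] by simp
  qed
  show "\<forall>c q \<omega> p. inR c q \<omega> p \<longrightarrow> 1 * en c p powr - 1 = 1 / en c p"
  proof (intro allI impI)
    fix c q \<omega> p assume "inR c q \<omega> p"
    hence "0 < en c p" by (rule inR_P)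
    thus "1 * en c p powr - 1 = 1 / en c p" by simp
  qed
qed

lemma S_divP: "S F \<Longrightarrow> S (\<lambda>c q \<omega> p. F c q \<omega> p / en c p)"
  using S_mult[OF _ S_invP] by simp

lemma lbnd_mono: "lbnd F \<Longrightarrow> (\<forall>c q \<omega> p. inR c q \<omega> p \<longrightarrow> F c q \<omega> p \<le> G c q \<omega> p) \<Longrightarrow> lbnd G"
  unfolding lbnd_def by (meson order_trans)

lemma lbnd_sqrt: "lbnd F \<Longrightarrow> lbnd (\<lambda>c q \<omega> p. sqrt (F c q \<omega> p))"
proof -
  assume "lbnd F"
  then obtain d n where d: "d > 0" "\<forall>c q \<omega> p. inR c q \<omega> p \<longrightarrow> d / jbr q ^ n \<le> F c q \<omega> p"
    unfolding lbnd_def by blast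
  have "\<forall>c q \<omega> p. inR c q \<omega> p \<longrightarrow> min d 1 / jbr q ^ n \<le> sqrt (F c q \<omega> p)"
  proof (intro allI impI)
    fix c q \<omega> p assume r: "inR c q \<omega> p"
    have j: "1 \<le> jbr q ^ n" using jbr_ge1[of q] by simp
    let ?a = "min d 1 / jbr q ^ n"
    have a0: "0 < ?a" "?a \<le> 1" using d j by (auto simp: divide_le_eq)
    have "?a \<le> d / jbr q ^ n" using j by (intro divide_right_mono) auto
    hence "?a \<le> F c q \<omega> p" using d r by force
    moreover have "?a \<le> sqrt ?a"
    proof -
      have s1: "sqrt ?a \<le> 1" using a0 by simp
      have "?a = sqrt ?a * sqrt ?a" using a0 by (metis abs_of_pos real_sqrt_mult_self)
      also have "\<dots> \<le> sqrt ?a * 1" using s1 a0 by (intro mult_left_mono) auto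
      finally show ?thesis by simp
    qed
    ultimately show "?a \<le> sqrt (F c q \<omega> p)" by (meson order_trans real_sqrt_le_iff)
  qed
  thus ?thesis unfolding lbnd_def using d by (intro exI[of _ "min d 1"]) auto
qed

lemma lbnd_mult: "lbnd F \<Longrightarrow> lbnd G \<Longrightarrow> lbnd (\<lambda>c q \<omega> p. F c q \<omega> p * G c q \<omega> p)"
proof -
  assume "lbnd F" "lbnd G"
  then obtain d1 n1 d2 n2 where d1: "d1 > 0" "\<forall>c q \<omega> p. inR c q \<omega> p \<longrightarrow> d1 / jbr q ^ n1 \<le> F c q \<omega> p"
    and d2: "d2 > 0" "\<forall>c q \<omega> p. inR c q \<omega> p \<longrightarrow> d2 / jbr q ^ n2 \<le> G c q \<omega> p"
    unfolding lbnd_def by blast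
  have "\<forall>c q \<omega> p. inR c q \<omega> p \<longrightarrow> (d1*d2) / jbr q ^ (n1+n2) \<le> F c q \<omega> p * G c q \<omega> p"
  proof (intro allI impI)
    fix c q \<omega> p assume r: "inR c q \<omega> p"
    have j: "0 < jbr q ^ n1" "0 < jbr q ^ n2" using jbr_ge1[of q] by auto
    have "(d1*d2) / jbr q ^ (n1+n2) = (d1 / jbr q ^ n1) * (d2 / jbr q ^ n2)" by (simp add: power_add)
    also have "\<dots> \<le> F c q \<omega> p * G c q \<omega> p"
    proof -
      have a: "d1 / jbr q ^ n1 \<le> F c q \<omega> p" "d2 / jbr q ^ n2 \<le> G c q \<omega> p" using d1 d2 r by auto
      have b: "0 \<le> d1 / jbr q ^ n1" "0 \<le> d2 / jbr q ^ n2" using d1 d2 j by auto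
      show ?thesis using a b by (intro mult_mono) (auto intro: order_trans)
    qed
    finally show "(d1*d2) / jbr q ^ (n1+n2) \<le> F c q \<omega> p * G c q \<omega> p" .
  qed
  thus ?thesis unfolding lbnd_def using d1 d2 by (intro exI[of _ "d1*d2"]) auto
qed

lemma vec_deriv_comp:
  fixes h :: "real \<Rightarrow> vec3"
  assumes "\<And>j. ((\<lambda>t. h t $ j) has_real_derivative d j) (at x)"
  shows "(h has_vector_derivative (\<chi> j. d j)) (at x)"
proof -
  have "(h has_derivative (\<lambda>t. t *\<^sub>R (\<chi> j. d j))) (at x)"
  proof (rule has_derivative_componentwise_within[THEN iffD2], intro ballI)
    fix b :: vec3 assume "b \<in> Basis"
    then obtain i where b: "b = axis i 1" by (auto simp: Basis_vec_def)
    show "((\<lambda>x. h x \<bullet> b) has_derivative (\<lambda>x. x *\<^sub>R (\<chi> j. d j) \<bullet> b)) (at x)"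
    proof -
      have e: "(\<lambda>x. x * d i) = (*) (d i)" by (rule ext) (simp add: mult.commute)
      show ?thesis using assms[of i] unfolding b has_field_derivative_def by (simp add: inner_axis e)
    qed
  qed
  thus ?thesis by (simp add: has_vector_derivative_def)
qed

lemma pdiff_transfer:
  fixes f g :: "vec3 \<Rightarrow> 'a::real_normed_vector"
  assumes r: "inR c q \<omega> p" and eq: "\<forall>p'. inR c q \<omega> p' \<longrightarrow> f p' = g p'"
    and d: "((\<lambda>t. g (p + t *\<^sub>R axis i 1)) has_vector_derivative D) (at 0)"
  shows "pdiff i f p = D"
proof -
  have "((\<lambda>t. f (p + t *\<^sub>R axis i 1)) has_vector_derivative D) (at 0)"
    unfolding has_vector_derivative_def
  proof (rule has_derivative_transform_within_open[OF d[unfolded has_vector_derivative_def] open_line])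
    show "0 \<in> {t. 4/3 * en c q < norm (p + t *\<^sub>R axis i 1)}" using r by (simp add: inR_def)
    fix t assume "t \<in> {t. 4/3 * en c q < norm (p + t *\<^sub>R axis i 1)}"
    hence "inR c q \<omega> (p + t *\<^sub>R axis i 1)" using r by (simp add: inR_def)
    thus "g (p + t *\<^sub>R axis i 1) = f (p + t *\<^sub>R axis i 1)" using eq by auto
  qed
  thus ?thesis unfolding pdiff_def by (rule vector_derivative_at)
qed

definition form_s :: "(real \<Rightarrow> vec3 \<Rightarrow> vec3 \<Rightarrow> real) \<Rightarrow> (real \<Rightarrow> vec3 \<Rightarrow> vec3 \<Rightarrow> vec3 \<Rightarrow> real) \<Rightarrow> bool" where
  "form_s K f \<longleftrightarrow> (\<exists>F. S F \<and> (\<forall>c q \<omega> p. inR c q \<omega> p \<longrightarrow> f c q \<omega> p = K c q \<omega> * F c q \<omega> p))"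

lemma form_s_step: "form_s K f \<Longrightarrow> form_s K (\<lambda>c q \<omega>. pdiff i (f c q \<omega>))"
proof -
  assume "form_s K f"
  then obtain F where F: "S F" "\<forall>c q \<omega> p. inR c q \<omega> p \<longrightarrow> f c q \<omega> p = K c q \<omega> * F c q \<omega> p"
    unfolding form_s_def by blast
  obtain G where G: "S G" "lined F i G" using S_lined[OF F(1)] by blast
  have "S (\<lambda>c q \<omega> p. G c q \<omega> p * (1 / en c p))" by (intro S_mult G S_invP)
  moreover have "\<forall>c q \<omega> p. inR c q \<omega> p \<longrightarrow> pdiff i (f c q \<omega>) p = K c q \<omega> * (G c q \<omega> p * (1 / en c p))"
  proof (intro allI impI)
    fix c q \<omega> p assume r: "inR c q \<omega> p"
    have "((\<lambda>t. K c q \<omega> * F c q \<omega> (p + t *\<^sub>R axis i 1)) has_real_derivative K c q \<omega> * (G c q \<omega> p / en c p)) (at 0)"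
      using DERIV_cmult[OF G(2)[unfolded lined_def, rule_format, OF r]] .
    hence "pdiff i (f c q \<omega>) p = K c q \<omega> * (G c q \<omega> p / en c p)"
      by (intro pdiff_transfer[OF r, where g="\<lambda>p. K c q \<omega> * F c q \<omega> p"])
         (use F(2) in \<open>auto simp: has_real_derivative_iff_has_vector_derivative\<close>)
    thus "pdiff i (f c q \<omega>) p = K c q \<omega> * (G c q \<omega> p * (1 / en c p))" by simp
  qed
  ultimately show ?thesis unfolding form_s_def by blast
qed

lemma form_s_iter: "form_s K f \<Longrightarrow> form_s K (\<lambda>c q \<omega>. (pdiff i ^^ k) (f c q \<omega>))"
proof (induction k)
  case 0 then show ?case by simp
next
  case (Suc k)
  from form_s_step[OF Suc.IH[OF Suc.prems], of i] show ?case by simp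
qed

lemma form_s_pdiffs: "form_s K f \<Longrightarrow> form_s K (\<lambda>c q \<omega>. pdiffs \<beta> (f c q \<omega>))"
  unfolding pdiffs_def by (intro form_s_iter)

definition formv0 :: "(real \<Rightarrow> vec3 \<Rightarrow> vec3 \<Rightarrow> vec3 \<Rightarrow> vec3) \<Rightarrow> bool" where
  "formv0 f \<longleftrightarrow> (\<exists>Z. (\<forall>j. S (\<lambda>c q \<omega> p. Z c q \<omega> p $ j)) \<and> (\<forall>c q \<omega> p. inR c q \<omega> p \<longrightarrow> f c q \<omega> p = Z c q \<omega> p))"

definition formv1 :: "(real \<Rightarrow> vec3 \<Rightarrow> vec3 \<Rightarrow> vec3 \<Rightarrow> vec3) \<Rightarrow> bool" where
  "formv1 f \<longleftrightarrow> (\<exists>Kv Z. (\<forall>j. S (\<lambda>c q \<omega> p. Z c q \<omega> p $ j)) \<and>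
      (\<forall>c q \<omega> p. inR c q \<omega> p \<longrightarrow> f c q \<omega> p = Kv c q \<omega> + en c p *\<^sub>R Z c q \<omega> p))"

lemma formv0_step: "formv0 f \<Longrightarrow> formv0 (\<lambda>c q \<omega>. pdiff i (f c q \<omega>))"
proof -
  assume "formv0 f"
  then obtain Z where Z: "\<forall>j. S (\<lambda>c q \<omega> p. Z c q \<omega> p $ j)" "\<forall>c q \<omega> p. inR c q \<omega> p \<longrightarrow> f c q \<omega> p = Z c q \<omega> p"
    unfolding formv0_def by blast
  have "\<forall>j. \<exists>G. S G \<and> lined (\<lambda>c q \<omega> p. Z c q \<omega> p $ j) i G" using Z(1) S_lined by blast
  then obtain G where G: "\<And>j. S (G j)" "\<And>j. lined (\<lambda>c q \<omega> p. Z c q \<omega> p $ j) i (G j)" by metis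
  let ?Z = "\<lambda>c q \<omega> p. (\<chi> j. G j c q \<omega> p * (1 / en c p))"
  have "\<forall>j. S (\<lambda>c q \<omega> p. ?Z c q \<omega> p $ j)"
  proof
    fix j
    have "S (\<lambda>c q \<omega> p. G j c q \<omega> p * (1 / en c p))" by (intro S_mult G(1) S_invP)
    thus "S (\<lambda>c q \<omega> p. ?Z c q \<omega> p $ j)" by simp
  qed
  moreover have "\<forall>c q \<omega> p. inR c q \<omega> p \<longrightarrow> pdiff i (f c q \<omega>) p = ?Z c q \<omega> p"
  proof (intro allI impI)
    fix c q \<omega> p assume r: "inR c q \<omega> p"
    have "((\<lambda>t. Z c q \<omega> (p + t *\<^sub>R axis i 1)) has_vector_derivative ?Z c q \<omega> p) (at 0)"
      by (rule vec_deriv_comp) (use G(2)[unfolded lined_def] r in simp)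
    thus "pdiff i (f c q \<omega>) p = ?Z c q \<omega> p"
      by (intro pdiff_transfer[OF r, where g="Z c q \<omega>"]) (use Z(2) in auto)
  qed
  ultimately show ?thesis unfolding formv0_def by (intro exI[of _ ?Z] conjI)
qed

lemma formv1_step: "formv1 f \<Longrightarrow> formv0 (\<lambda>c q \<omega>. pdiff i (f c q \<omega>))"
proof -
  assume "formv1 f"
  then obtain Kv Z where Z: "\<forall>j. S (\<lambda>c q \<omega> p. Z c q \<omega> p $ j)"
      "\<forall>c q \<omega> p. inR c q \<omega> p \<longrightarrow> f c q \<omega> p = Kv c q \<omega> + en c p *\<^sub>R Z c q \<omega> p"
    unfolding formv1_def by blast
  have "\<forall>j. \<exists>G. S G \<and> lined (\<lambda>c q \<omega> p. Z c q \<omega> p $ j) i G" using Z(1) S_lined by blast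
  then obtain G where G: "\<And>j. S (G j)" "\<And>j. lined (\<lambda>c q \<omega> p. Z c q \<omega> p $ j) i (G j)" by metis
  let ?Z = "\<lambda>c q \<omega> p. (\<chi> j. p $ i / en c p * Z c q \<omega> p $ j + G j c q \<omega> p)"
  have "\<forall>j. S (\<lambda>c q \<omega> p. ?Z c q \<omega> p $ j)"
  proof
    fix j
    have "S (\<lambda>c q \<omega> p. p $ i / en c p * Z c q \<omega> p $ j + G j c q \<omega> p)"
      by (intro S_add S_mult S_u G(1) Z(1)[rule_format])
    thus "S (\<lambda>c q \<omega> p. ?Z c q \<omega> p $ j)" by simp
  qed
  moreover have "\<forall>c q \<omega> p. inR c q \<omega> p \<longrightarrow> pdiff i (f c q \<omega>) p = ?Z c q \<omega> p"
  proof (intro allI impI)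
    fix c q \<omega> p assume r: "inR c q \<omega> p"
    have P: "0 < en c p" using inR_P[OF r] .
    have "((\<lambda>t. Kv c q \<omega> + en c (p + t *\<^sub>R axis i 1) *\<^sub>R Z c q \<omega> (p + t *\<^sub>R axis i 1)) has_vector_derivative ?Z c q \<omega> p) (at 0)"
    proof (rule vec_deriv_comp)
      fix j
      have dm: "((\<lambda>t. en c (p + t *\<^sub>R axis i 1) * Z c q \<omega> (p + t *\<^sub>R axis i 1) $ j) has_real_derivative
          p $ i / en c p * Z c q \<omega> p $ j + G j c q \<omega> p / en c p * en c p) (at 0)"
        using DERIV_mult[OF LD_en[OF inR_c[OF r], of p i] G(2)[unfolded lined_def, rule_format, OF r, of j]] by simp
      have "((\<lambda>t. Kv c q \<omega> $ j + en c (p + t *\<^sub>R axis i 1) * Z c q \<omega> (p + t *\<^sub>R axis i 1) $ j) has_real_derivative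
          0 + (p $ i / en c p * Z c q \<omega> p $ j + G j c q \<omega> p / en c p * en c p)) (at 0)"
        by (rule DERIV_add[OF DERIV_const dm])
      thus "((\<lambda>t. (Kv c q \<omega> + en c (p + t *\<^sub>R axis i 1) *\<^sub>R Z c q \<omega> (p + t *\<^sub>R axis i 1)) $ j) has_real_derivative p $ i / en c p * Z c q \<omega> p $ j + G j c q \<omega> p) (at 0)"
        using P by simp
    qed
    thus "pdiff i (f c q \<omega>) p = ?Z c q \<omega> p"
      by (intro pdiff_transfer[OF r, where g="\<lambda>p. Kv c q \<omega> + en c p *\<^sub>R Z c q \<omega> p"]) (use Z(2) in auto)
  qed
  ultimately show ?thesis unfolding formv0_def by (intro exI[of _ ?Z] conjI)
qed

lemma formv0_1: "formv0 f \<Longrightarrow> formv1 f"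
proof -
  assume "formv0 f"
  then obtain Z where Z: "\<forall>j. S (\<lambda>c q \<omega> p. Z c q \<omega> p $ j)" "\<forall>c q \<omega> p. inR c q \<omega> p \<longrightarrow> f c q \<omega> p = Z c q \<omega> p"
    unfolding formv0_def by blast
  let ?Z = "\<lambda>c q \<omega> p. (1 / en c p) *\<^sub>R Z c q \<omega> p"
  have "\<forall>j. S (\<lambda>c q \<omega> p. ?Z c q \<omega> p $ j)"
  proof
    fix j
    have "S (\<lambda>c q \<omega> p. 1 / en c p * Z c q \<omega> p $ j)" by (intro S_mult Z(1)[rule_format] S_invP)
    thus "S (\<lambda>c q \<omega> p. ?Z c q \<omega> p $ j)" by simp
  qed
  moreover have "\<forall>c q \<omega> p. inR c q \<omega> p \<longrightarrow> f c q \<omega> p = 0 + en c p *\<^sub>R ?Z c q \<omega> p"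
  proof (intro allI impI)
    fix c q \<omega> p assume r: "inR c q \<omega> p"
    hence "en c p \<noteq> 0" using inR_P by force
    thus "f c q \<omega> p = 0 + en c p *\<^sub>R ?Z c q \<omega> p" using Z(2) r by simp
  qed
  ultimately show ?thesis unfolding formv1_def by (intro exI[of _ "\<lambda>c q \<omega>. 0"] exI[of _ ?Z] conjI)
qed

lemma formv0_iter: "formv0 f \<Longrightarrow> formv0 (\<lambda>c q \<omega>. (pdiff i ^^ k) (f c q \<omega>))"
proof (induction k)
  case 0 then show ?case by simp
next
  case (Suc k)
  from formv0_step[OF Suc.IH[OF Suc.prems], of i] show ?case by simp
qed

lemma formv1_iter:
  assumes f: "formv1 f"
  shows "formv1 (\<lambda>c q \<omega>. (pdiff i ^^ k) (f c q \<omega>)) \<and>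
   (0 < k \<longrightarrow> formv0 (\<lambda>c q \<omega>. (pdiff i ^^ k) (f c q \<omega>)))"
proof (cases k)
  case 0 then show ?thesis using f by simp
next
  case (Suc k')
  have "formv0 (\<lambda>c q \<omega>. (pdiff i ^^ k') (pdiff i (f c q \<omega>)))"
    by (rule formv0_iter[OF formv1_step[OF f]])
  hence "formv0 (\<lambda>c q \<omega>. (pdiff i ^^ k) (f c q \<omega>))" unfolding Suc by (simp add: funpow_Suc_right del: funpow.simps)
  thus ?thesis using formv0_1 by blast
qed

lemma formv_pdiffs: "formv1 f \<Longrightarrow> \<beta> \<noteq> (\<lambda>_. 0) \<Longrightarrow> formv0 (\<lambda>c q \<omega>. pdiffs \<beta> (f c q \<omega>))"
proof -
  assume f: "formv1 f" and b: "\<beta> \<noteq> (\<lambda>_. 0)"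
  let ?f3 = "\<lambda>c q \<omega>. (pdiff 3 ^^ \<beta> 3) (f c q \<omega>)"
  let ?f2 = "\<lambda>c q \<omega>. (pdiff 2 ^^ \<beta> 2) (?f3 c q \<omega>)"
  let ?f1 = "\<lambda>c q \<omega>. (pdiff 1 ^^ \<beta> 1) (?f2 c q \<omega>)"
  have 3: "formv1 ?f3" "0 < \<beta> 3 \<longrightarrow> formv0 ?f3" using formv1_iter[OF f] by blast+
  have 2: "formv1 ?f2" "0 < \<beta> 2 \<longrightarrow> formv0 ?f2" using formv1_iter[OF 3(1)] by blast+
  have 1: "0 < \<beta> 1 \<longrightarrow> formv0 ?f1" using formv1_iter[OF 2(1)] by blast
  have "\<beta> 1 \<noteq> 0 \<or> \<beta> 2 \<noteq> 0 \<or> \<beta> 3 \<noteq> 0"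
  proof (rule ccontr)
    assume "\<not> ?thesis"
    hence "\<beta> x = 0" for x :: 3 using exhaust_3[of x] by auto
    thus False using b by auto
  qed
  moreover have "formv0 ?f2" if "0 < \<beta> 3" using 3(2) that formv0_iter by blast
  ultimately have "formv0 ?f1" using 1 2(2) formv0_iter by blast
  thus ?thesis unfolding pdiffs_def .
qed

lemma chiok_from:
  fixes chi :: "real \<Rightarrow> real"
  assumes smooth: "\<forall>k x. x > 0 \<longrightarrow> ((deriv ^^ k) chi) differentiable (at x)"
    and bnd: "\<forall>r\<ge>0. 0 \<le> chi r \<and> chi r \<le> 1"
    and one: "\<forall>r. 0 \<le> r \<and> r \<le> 1 \<longrightarrow> chi r = 1"
    and zero: "\<forall>r>2. chi r = 0"
  shows "chiok chi"
proof -
  have low: "\<forall>x. 0 < x \<and> x < 1 \<longrightarrow> (deriv ^^ k) chi x = (if k = 0 then 1 else 0)" for k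
  proof (induction k)
    case 0 then show ?case using one by auto
  next
    case (Suc k)
    show ?case
    proof (intro allI impI)
      fix x :: real assume x: "0 < x \<and> x < 1"
      have "((deriv ^^ k) chi has_real_derivative 0) (at x)"
        by (rule has_field_derivative_transform_within_open[OF DERIV_const[of "if k = 0 then 1 else 0"], of "{0<..<1}"])
           (use x Suc.IH in auto)
      thus "(deriv ^^ Suc k) chi x = (if Suc k = 0 then 1 else 0)" by (simp add: DERIV_imp_deriv)
    qed
  qed
  have high: "\<forall>x. 2 < x \<longrightarrow> (deriv ^^ k) chi x = 0" for k
  proof (induction k)
    case 0 then show ?case using zero by auto
  next
    case (Suc k)
    show ?case
    proof (intro allI impI)
      fix x :: real assume x: "2 < x"
      have "((deriv ^^ k) chi has_real_derivative 0) (at x)"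
        by (rule has_field_derivative_transform_within_open[OF DERIV_const[of 0], of "{2<..}"])
           (use x Suc.IH in auto)
      thus "(deriv ^^ Suc k) chi x = 0" by (simp add: DERIV_imp_deriv)
    qed
  qed
  have bd: "\<exists>B. \<forall>x>0. \<bar>(deriv ^^ k) chi x * x ^ m\<bar> \<le> B" for k m
  proof -
    let ?f = "\<lambda>x. (deriv ^^ k) chi x * x ^ m"
    have "continuous_on {1..2} ?f"
    proof (intro continuous_on_mult continuous_intros continuous_at_imp_continuous_on ballI)
      fix x :: real assume "x \<in> {1..2}"
      hence "(deriv ^^ k) chi differentiable (at x)" using smooth by auto
      thus "isCont ((deriv ^^ k) chi) x" by (rule differentiable_imp_continuous_within)
    qed
    hence "bounded (?f ` {1..2})" by (intro compact_imp_bounded compact_continuous_image) auto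
    then obtain B where B: "\<forall>y\<in>?f ` {1..2}. norm y \<le> B" unfolding bounded_iff by blast
    show ?thesis
    proof (intro exI[of _ "max 1 B"] allI impI)
      fix x :: real assume x: "0 < x"
      show "\<bar>?f x\<bar> \<le> max 1 B"
      proof (cases "x < 1")
        case True
        have "x ^ m \<le> 1" using x True by (simp add: power_le_one)
        thus ?thesis using low[of k] x True by auto
      next
        case False
        show ?thesis
        proof (cases "x \<le> 2")
          case True
          hence "norm (?f x) \<le> B" using B False by auto
          thus ?thesis by simp
        next
          case False
          thus ?thesis using high[of k] by simp
        qed
      qed
    qed
  qed
  show ?thesis unfolding chiok_def using smooth bd by blast
qed

lemma key_ineq:
  fixes c x y P Q :: real
  assumes c: "1 \<le> c" and P: "P^2 = c^2 + x^2" "0 \<le> P" and Q: "Q^2 = c^2 + y^2" "0 \<le> Q"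
    and x: "0 \<le> x" and y: "0 \<le> y" and xq: "4/3 * Q < x"
  shows "(1/100) * (c^4 / Q^4) \<le> 2 * (P*Q - x*y - c^2) / (P*Q)"
proof -
  have yQ: "y \<le> Q" by (rule power2_le_imp_le) (use Q y in auto)
  have cQ: "c \<le> Q" by (rule power2_le_imp_le) (use Q c in auto)
  have Qp: "0 < Q" using cQ c by linarith
  have xP: "x \<le> P" by (rule power2_le_imp_le) (use P x in auto)
  have cP: "c \<le> P" by (rule power2_le_imp_le) (use P c in auto)
  have Pp: "0 < P" using cP c by linarith
  have "P^2 \<le> (5/4 * x)^2"
  proof -
    have "c^2 \<le> Q^2" by (rule power_mono) (use cQ c in auto)
    moreover have "Q^2 \<le> (3/4*x)^2" by (rule power_mono) (use xq Qp in auto)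
    ultimately show ?thesis using P by (simp add: power2_eq_square)
  qed
  hence P54: "P \<le> 5/4 * x" by (rule power2_le_imp_le) (use x in auto)
  define D where "D = x*Q - y*P"
  have hD: "D * (x*Q + y*P) = c^2 * (x^2 - y^2)"
  proof -
    have "D * (x*Q + y*P) = x^2 * Q^2 - y^2 * P^2" unfolding D_def by (simp add: algebra_simps power2_eq_square)
    thus ?thesis using P Q by (simp add: algebra_simps)
  qed
  have h5: "x*Q + y*P \<le> 9/4 * (x*Q)"
  proof -
    have "y*P \<le> Q * (5/4*x)" using yQ P54 y Pp by (intro mult_mono) auto
    thus ?thesis by simp
  qed
  have h5p: "0 < x*Q + y*P"
  proof -
    have "0 < x" using xq Qp by linarith
    hence "0 < x*Q" using Qp by simp
    moreover have "0 \<le> y*P" using y Pp by simp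
    ultimately show ?thesis by linarith
  qed
  have h6: "7/16 * x^2 \<le> x^2 - y^2"
  proof -
    have "y^2 \<le> (3/4*x)^2" by (rule power_mono) (use yQ xq y in auto)
    thus ?thesis by (simp add: power2_eq_square)
  qed
  have h7: "7/36 * (c^2 * x / Q) \<le> D"
  proof -
    have "D = c^2 * (x^2 - y^2) / (x*Q + y*P)" using hD h5p by (simp add: eq_divide_eq)
    also have "\<dots> \<ge> c^2 * (7/16 * x^2) / (9/4 * (x*Q))"
    proof -
      have "0 \<le> 7/16 * x^2" by simp
      hence xy0: "0 \<le> x^2 - y^2" using h6 by linarith
      show ?thesis using h5 h6 h5p xy0 by (intro frac_le mult_left_mono) auto
    qed
    finally have "c^2 * (7/16 * x^2) / (9/4 * (x*Q)) \<le> D" .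
    moreover have "c^2 * (7/16 * x^2) / (9/4 * (x*Q)) = 7/36 * (c^2 * x / Q)"
      using xq Qp by (simp add: field_simps power2_eq_square)
    ultimately show ?thesis by simp
  qed
  have D0: "0 \<le> 7/36 * (c^2 * x / Q)" using x Qp by simp
  define X0 where "X0 = P*Q - x*y - c^2"
  have pq: "(P*Q)^2 = (c^2+x^2)*(c^2+y^2)" using P(1) Q(1) by (simp add: power_mult_distrib)
  have "(P*Q)^2 - (x*y + c^2)^2 = c^2 * (x - y)^2"
    unfolding pq by (simp add: algebra_simps power2_eq_square)
  moreover have "0 \<le> c^2 * (x - y)^2" by simp
  ultimately have "(x*y + c^2)^2 \<le> (P*Q)^2" by linarith
  hence "x*y + c^2 \<le> P*Q" by (rule power2_le_imp_le) (use Pp Qp in auto)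
  hence X0p: "0 \<le> X0" unfolding X0_def by simp
  have e1: "X0 * (X0 + 2*c^2) = (P*Q)^2 - 2*(x*y)*(P*Q) + (x*y)^2 - (c^2)^2"
    unfolding X0_def by (simp add: power2_eq_square algebra_simps)
  have e2: "D^2 = x^2*Q^2 - 2*(x*y)*(P*Q) + y^2*P^2"
    unfolding D_def by (simp add: power2_eq_square algebra_simps)
  have h8: "X0 * (X0 + 2*c^2) = D^2"
    unfolding e1 e2 pq P(1) Q(1) by (simp add: power2_eq_square algebra_simps)
  have h10: "X0 + 2*c^2 \<le> 3*(P*Q)"
  proof -
    have "c^2 \<le> P*Q" using cP cQ c by (simp add: power2_eq_square mult_mono)
    moreover have "X0 \<le> P*Q"
    proof -
      have "0 \<le> x*y" using x y by simp
      moreover have "0 \<le> c^2" by simp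
      ultimately show ?thesis unfolding X0_def by linarith
    qed
    ultimately show ?thesis by simp
  qed
  have h11: "D^2 \<le> X0 * (3*(P*Q))" using h8 h10 X0p by (metis mult_left_mono)
  have "(7/36 * (c^2 * x / Q))^2 \<le> D^2" by (rule power_mono) (use h7 D0 in auto)
  hence h12: "(7/36 * (c^2 * x / Q))^2 \<le> X0 * (3*(P*Q))" using h11 by linarith
  have x2: "16/25 * P^2 \<le> x^2"
  proof -
    have "(4/5*P)^2 \<le> x^2" by (rule power_mono) (use P54 Pp in auto)
    thus ?thesis by (simp add: power2_eq_square)
  qed
  have "(1/100) * (c^4 / Q^4) \<le> 2 * X0 / (P*Q)"
  proof -
    have "(1/100) * (c^4 / Q^4) * (P*Q) * (3*(P*Q)) \<le> 2 * (7/36 * (c^2 * x / Q))^2"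
    proof -
      have "(1/100) * (c^4 / Q^4) * (P*Q) * (3*(P*Q)) = 3/100 * (c^4/Q^2) * P^2"
        using Qp by (simp add: field_simps power2_eq_square power4_eq_xxxx)
      also have "\<dots> \<le> 3/100 * (c^4/Q^2) * (25/16 * x^2)" using x2 Qp by (intro mult_left_mono) auto
      also have "\<dots> \<le> 2 * (7/36 * (c^2 * x / Q))^2"
      proof -
        have z: "0 \<le> c^4 * x^2 / Q^2" by simp
        have l: "3/100 * (c^4/Q^2) * (25/16 * x^2) = 75/1600 * (c^4 * x^2 / Q^2)" by (simp add: field_simps)
        have r: "2 * (7/36 * (c^2 * x / Q))^2 = 98/1296 * (c^4 * x^2 / Q^2)"
          by (simp add: field_simps power2_eq_square power4_eq_xxxx)
        show ?thesis unfolding l r using z by linarith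
      qed
      finally show ?thesis .
    qed
    also have "\<dots> \<le> 2 * (X0 * (3*(P*Q)))" using h12 by linarith
    finally have "(1/100) * (c^4 / Q^4) * (P*Q) * (3*(P*Q)) \<le> 2 * X0 * (3*(P*Q))" by simp
    hence "(1/100) * (c^4 / Q^4) * (P*Q) \<le> 2 * X0"
      by (rule mult_right_le_imp_le) (use Pp Qp in simp)
    thus ?thesis using Pp Qp by (simp add: le_divide_eq)
  qed
  thus ?thesis unfolding X0_def .
qed

lemma reg:
  assumes r: "inR c q \<omega> p"
  shows "1 \<le> c" "c \<le> en c q" "norm q \<le> en c q" "4/3 * en c q < norm p" "norm p \<le> en c p"
    "en c p \<le> 5/4 * norm p" "0 < en c p" "0 < en c q" "en c q \<le> en c p" "en c q \<le> c * jbr q"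
    "norm \<omega> = 1" "c \<le> en c p"
proof -
  show c: "1 \<le> c" using r by (simp add: inR_def)
  show cQ: "c \<le> en c q" using en_ge[OF c] .
  show "norm q \<le> en c q" by (rule en_ge_norm)
  show xq: "4/3 * en c q < norm p" using r by (simp add: inR_def)
  show "norm p \<le> en c p" by (rule en_ge_norm)
  show "0 < en c p" "0 < en c q" using en_pos[OF c] by auto
  show "norm \<omega> = 1" using r by (simp add: inR_def)
  show "c \<le> en c p" using en_ge[OF c] .
  have "en c p ^2 \<le> (5/4 * norm p)^2"
  proof -
    have "c^2 \<le> en c q ^2" by (rule power_mono) (use cQ c in auto)
    moreover have "en c q^2 \<le> (3/4*norm p)^2" by (rule power_mono) (use xq en_pos[OF c, of q] in auto)
    ultimately show ?thesis using en_sq[of c p] by (simp add: power2_eq_square)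
  qed
  thus P54: "en c p \<le> 5/4 * norm p" by (rule power2_le_imp_le) auto
  show "en c q \<le> en c p" using xq \<open>norm p \<le> en c p\<close> en_pos[OF c, of q] by linarith
  have "en c q ^2 \<le> (c * jbr q)^2"
  proof -
    have "en c q ^2 = c^2 + norm q^2" by (rule en_sq)
    also have "\<dots> \<le> c^2 + c^2 * norm q^2"
    proof -
      have "1 \<le> c^2" using c by (simp add: one_le_power)
      hence "1 * norm q^2 \<le> c^2 * norm q^2" by (rule mult_right_mono) simp
      thus ?thesis by simp
    qed
    also have "\<dots> = (c * jbr q)^2" unfolding jbr_def by (simp add: power_mult_distrib algebra_simps)
    finally show ?thesis .
  qed
  thus "en c q \<le> c * jbr q" by (rule power2_le_imp_le) (use c jbr_ge1[of q] in auto)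
qed

lemma powr_mhalf: "0 < (x::real) \<Longrightarrow> x powr (-1/2) = 1 / sqrt x"
proof -
  assume x: "0 < x"
  have "x powr (-1/2) = x powr (-(1/2))" by simp
  also have "\<dots> = inverse (x powr (1/2))" by (rule powr_minus)
  also have "\<dots> = 1 / sqrt x" by (simp only: powr_half_sqrt[OF less_imp_le[OF x]] inverse_eq_divide)
  finally show ?thesis .
qed

definition G2 :: fam where "G2 c q \<omega> p = 2 * (en c p * en c q - p \<bullet> q - c^2) / (en c p * en c q)"
definition S2 :: fam where "S2 c q \<omega> p = 2 * (en c p * en c q - p \<bullet> q + c^2) / (en c p * en c q)"

lemma abs_le_div1: "0 < (P::real) \<Longrightarrow> \<bar>a\<bar> \<le> P \<Longrightarrow> \<bar>a / P\<bar> \<le> 1"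
  by (simp add: abs_divide divide_le_eq_1)

lemma abs_le_powr1: "0 < (P::real) \<Longrightarrow> \<bar>a\<bar> \<le> P \<Longrightarrow> \<bar>a * P powr -1\<bar> \<le> 1"
  using abs_le_div1[of P a] by (simp add: powr_neg_one divide_inverse)

lemma S_cP: "S (\<lambda>c q \<omega> p. c * en c p powr -1)"
proof (rule S_gen[where K="\<lambda>c q \<omega>. c"], rule bndf_const[of _ 1], intro allI impI)
  fix c q \<omega> p assume r: "inR c q \<omega> p"
  show "\<bar>c * en c p powr - 1\<bar> \<le> 1" using reg(1,7,12)[OF r] by (intro abs_le_powr1) auto
qed

lemma S_QP: "S (\<lambda>c q \<omega> p. en c q * en c p powr -1)"
proof (rule S_gen[where K="\<lambda>c q \<omega>. en c q"], rule bndf_const[of _ 1], intro allI impI)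
  fix c q \<omega> p assume r: "inR c q \<omega> p"
  show "\<bar>en c q * en c p powr - 1\<bar> \<le> 1" using reg(7,8,9)[OF r] by (intro abs_le_powr1) auto
qed

lemma S_qP: "S (\<lambda>c q \<omega> p. q $ k * en c p powr -1)"
proof (rule S_gen[where K="\<lambda>c q \<omega>. q $ k"], rule bndf_const[of _ 1], intro allI impI)
  fix c q \<omega> p assume r: "inR c q \<omega> p"
  have "\<bar>q $ k\<bar> \<le> en c p" using component_le_norm_cart[of q k] reg[OF r] by linarith
  thus "\<bar>q $ k * en c p powr - 1\<bar> \<le> 1" using reg[OF r] by (simp add: powr_neg_one abs_mult)
qed

lemma S_sqQP: "S (\<lambda>c q \<omega> p. sqrt (en c q) * en c p powr (-1/2))"
proof (rule S_gen[where K="\<lambda>c q \<omega>. sqrt (en c q)"], rule bndf_const[of _ 1], intro allI impI)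
  fix c q \<omega> p assume r: "inR c q \<omega> p"
  have e: "en c p powr (-1/2) = 1 / sqrt (en c p)"
    using reg(7)[OF r] by (rule powr_mhalf)
  have "sqrt (en c q) \<le> sqrt (en c p)" using reg(9)[OF r] by simp
  thus "\<bar>sqrt (en c q) * en c p powr (-1/2)\<bar> \<le> 1" unfolding e using reg(7,8)[OF r] by simp
qed

lemma S_qQ: "S (\<lambda>c q \<omega> p. q $ k / en c q)"
proof (rule S_constb[of _ 1], intro allI impI)
  fix c q \<omega> p assume r: "inR c q \<omega> p"
  have "\<bar>q $ k\<bar> \<le> en c q" using component_le_norm_cart[of q k] reg[OF r] by linarith
  thus "\<bar>q $ k / en c q\<bar> \<le> 1" using reg[OF r] by (simp add: abs_divide divide_le_eq_1)
qed

lemma S_cQ: "S (\<lambda>c q \<omega> p. c / en c q)"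
proof (rule S_constb[of _ 1], intro allI impI)
  fix c q \<omega> p assume r: "inR c q \<omega> p"
  show "\<bar>c / en c q\<bar> \<le> 1" using reg(1,2,8)[OF r] by (intro abs_le_div1) auto
qed

lemma S_om: "S (\<lambda>c q \<omega> p. \<omega> $ k)"
  by (rule S_constb[of _ 1]) (use reg component_le_norm_cart in metis)

lemma inner_sum3: "(a::vec3) \<bullet> b = (\<Sum>j\<in>UNIV. a $ j * b $ j)"
  by (simp add: inner_vec_def)

lemma S_G2: "S G2"
proof (rule S_cong)
  let ?E = "\<lambda>c q \<omega> p. 2 + (-2) * (\<Sum>j\<in>UNIV. (p $ j / en c p) * (q $ j / en c q)) + (-2) * ((c * en c p powr -1) * (c / en c q))"
  show "S ?E" by (intro S_add S_mult S_num S_sum S_u S_qQ S_cP S_cQ)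
  show "\<forall>c q \<omega> p. inR c q \<omega> p \<longrightarrow> ?E c q \<omega> p = G2 c q \<omega> p"
  proof (intro allI impI)
    fix c q \<omega> p assume r: "inR c q \<omega> p"
    have P: "0 < en c p" "0 < en c q" using reg[OF r] by auto
    have "(\<Sum>j\<in>UNIV. (p $ j / en c p) * (q $ j / en c q)) = (p \<bullet> q) / (en c p * en c q)"
      unfolding inner_sum3 sum_divide_distrib by simp
    thus "?E c q \<omega> p = G2 c q \<omega> p" unfolding G2_def using P
      by (simp add: powr_neg_one field_simps power2_eq_square)
  qed
qed

lemma S_S2: "S S2"
proof (rule S_cong)
  let ?E = "\<lambda>c q \<omega> p. G2 c q \<omega> p + 4 * ((c * en c p powr -1) * (c / en c q))"
  show "S ?E" by (intro S_add S_mult S_num S_G2 S_cP S_cQ)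
  show "\<forall>c q \<omega> p. inR c q \<omega> p \<longrightarrow> ?E c q \<omega> p = S2 c q \<omega> p"
  proof (intro allI impI)
    fix c q \<omega> p assume r: "inR c q \<omega> p"
    have P: "0 < en c p" "0 < en c q" using reg[OF r] by auto
    thus "?E c q \<omega> p = S2 c q \<omega> p" unfolding G2_def S2_def using P
      by (simp add: powr_neg_one field_simps power2_eq_square)
  qed
qed

lemma G2_low: "inR c q \<omega> p \<Longrightarrow> (1/100) / jbr q ^ 4 \<le> G2 c q \<omega> p"
proof -
  assume r: "inR c q \<omega> p"
  note R = reg[OF r]
  have k: "(1/100) * (c^4 / en c q^4) \<le> 2 * (en c p * en c q - norm p * norm q - c^2) / (en c p * en c q)"
    using R by (intro key_ineq) (auto simp: en_sq)
  have "p \<bullet> q \<le> norm p * norm q" by (rule norm_cauchy_schwarz)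
  hence "2 * (en c p * en c q - norm p * norm q - c^2) / (en c p * en c q) \<le> G2 c q \<omega> p"
    unfolding G2_def using R by (intro divide_right_mono) auto
  moreover have "1 / jbr q ^ 4 \<le> c^4 / en c q^4"
  proof -
    have "en c q ^ 4 \<le> (c * jbr q)^4" by (rule power_mono) (use R in auto)
    moreover have "0 < en c q ^ 4" using R by simp
    ultimately have "1 / (c * jbr q)^4 \<le> 1 / en c q ^4"
      by (intro divide_left_mono) (auto intro!: mult_pos_pos)
    hence "1 / (c * jbr q)^4 * c^4 \<le> 1 / en c q ^4 * c^4"
      by (rule mult_right_mono) simp
    thus ?thesis using R by (simp add: power_mult_distrib)
  qed
  moreover have "(1/100) / jbr q ^ 4 = (1/100) * (1 / jbr q ^ 4)" by simp
  ultimately show ?thesis using k by linarith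
qed

lemma lbnd_G2: "lbnd G2"
  unfolding lbnd_def using G2_low by (intro exI[of _ "1/100"] conjI exI[of _ 4]) auto

lemma lbnd_S2: "lbnd S2"
proof (rule lbnd_mono[OF lbnd_G2], intro allI impI)
  fix c q \<omega> p assume r: "inR c q \<omega> p"
  have "0 < en c p * en c q" using reg[OF r] by simp
  thus "G2 c q \<omega> p \<le> S2 c q \<omega> p" unfolding G2_def S2_def by (intro divide_right_mono) auto
qed

lemma G2_pos: "inR c q \<omega> p \<Longrightarrow> 0 < G2 c q \<omega> p" using lbnd_pos[OF lbnd_G2] .
lemma S2_pos: "inR c q \<omega> p \<Longrightarrow> 0 < S2 c q \<omega> p" using lbnd_pos[OF lbnd_S2] .

lemma ggg_eq:
  assumes r: "inR c q \<omega> p" shows "ggg c p q = sqrt (G2 c q \<omega> p * (en c p * en c q))"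
proof -
  have "en c p * en c q \<noteq> 0" using reg(7,8)[OF r] by simp
  thus ?thesis unfolding ggg_def G2_def by simp
qed

lemma sss_eq:
  assumes r: "inR c q \<omega> p" shows "sss c p q = S2 c q \<omega> p * (en c p * en c q)"
proof -
  have "en c p * en c q \<noteq> 0" using reg(7,8)[OF r] by simp
  thus ?thesis unfolding sss_def S2_def by simp
qed

lemma vphi_eq: "inR c q \<omega> p \<Longrightarrow> vphi c p q = c * ((1/4) * (sqrt (G2 c q \<omega> p) * sqrt (S2 c q \<omega> p)))"
proof -
  assume r: "inR c q \<omega> p"
  have P: "0 < en c p * en c q" using reg[OF r] by simp
  let ?X = "sqrt (en c p * en c q)" and ?g = "sqrt (G2 c q \<omega> p)" and ?s = "sqrt (S2 c q \<omega> p)"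
  have s: "?X * ?X = en c p * en c q" using P by simp
  have a: "?g * ?X * (?s * ?X) = ?g * ?s * (?X * ?X)" by (simp only: mult_ac)
  show ?thesis unfolding vphi_def ggg_eq[OF r] sss_eq[OF r] real_sqrt_mult[of "G2 c q \<omega> p"] real_sqrt_mult[of "S2 c q \<omega> p"] a s
    using reg(7,8)[OF r] by (simp add: field_simps)
qed

definition Nu :: fam where "Nu c q \<omega> p = norm p ^ 2 / en c p ^ 2"

lemma S_Nu: "S Nu"
proof (rule S_cong)
  let ?E = "\<lambda>c q \<omega> p. \<Sum>j\<in>UNIV. (p $ j / en c p) * (p $ j / en c p)"
  show "S ?E" by (intro S_sum S_mult S_u)
  show "\<forall>c q \<omega> p. inR c q \<omega> p \<longrightarrow> ?E c q \<omega> p = Nu c q \<omega> p"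
  proof (intro allI impI)
    fix c q \<omega> p assume r: "inR c q \<omega> p"
    have "?E c q \<omega> p = (p \<bullet> p) / (en c p * en c p)"
      unfolding inner_sum3 sum_divide_distrib by simp
    thus "?E c q \<omega> p = Nu c q \<omega> p" unfolding Nu_def by (simp add: dot_square_norm power2_eq_square)
  qed
qed

lemma lbnd_Nu: "lbnd Nu"
  unfolding lbnd_def
proof (intro exI[of _ "16/25"] conjI exI[of _ 0] allI impI)
  fix c q \<omega> p assume r: "inR c q \<omega> p"
  note R = reg[OF r]
  have "(4/5 * en c p)^2 \<le> norm p ^2" by (rule power_mono) (use R in auto)
  thus "16/25 / jbr q ^ 0 \<le> Nu c q \<omega> p" unfolding Nu_def using R
    by (simp add: field_simps power2_eq_square)
qed simp

lemma S_chiAc: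
  assumes ok: "chiok chi"
  shows "S (\<lambda>c q \<omega> p. chiAc chi c p q)"
proof (rule S_cong)
  let ?F1 = "\<lambda>c q \<omega> p. en c p / c"
  let ?F2 = "\<lambda>c q \<omega> p. 2/3 * norm p / en c q"
  let ?E = "\<lambda>c q \<omega> p. (1 + (-1) * ((deriv ^^ 0) chi (?F1 c q \<omega> p) * ?F1 c q \<omega> p ^ 0)) *
                       (1 + (-1) * ((deriv ^^ 0) chi (?F2 c q \<omega> p) * ?F2 c q \<omega> p ^ 0))"
  have d1: "\<forall>i. \<exists>D. S D \<and> lined ?F1 i (\<lambda>c q \<omega> p. ?F1 c q \<omega> p * D c q \<omega> p)"
  proof
    fix i
    have "lined ?F1 i (\<lambda>c q \<omega> p. ?F1 c q \<omega> p * (p $ i / en c p))"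
      unfolding lined_def
    proof (intro allI impI)
      fix c q \<omega> p assume r: "inR c q \<omega> p"
      note R = reg[OF r]
      have "((\<lambda>t. (1/c) * en c (p + t *\<^sub>R axis i 1)) has_real_derivative (1/c) * (p $ i / en c p)) (at 0)"
        by (intro DERIV_cmult LD_en R(1))
      thus "((\<lambda>t. ?F1 c q \<omega> (p + t *\<^sub>R axis i 1)) has_real_derivative ?F1 c q \<omega> p * (p $ i / en c p) / en c p) (at 0)"
        using R by simp
    qed
    thus "\<exists>D. S D \<and> lined ?F1 i (\<lambda>c q \<omega> p. ?F1 c q \<omega> p * D c q \<omega> p)" using S_u by blast
  qed
  have d2: "\<forall>i. \<exists>D. S D \<and> lined ?F2 i (\<lambda>c q \<omega> p. ?F2 c q \<omega> p * D c q \<omega> p)"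
  proof
    fix i
    let ?D = "\<lambda>c q \<omega> p. (p $ i / en c p) * inverse (Nu c q \<omega> p)"
    have "lined ?F2 i (\<lambda>c q \<omega> p. ?F2 c q \<omega> p * ?D c q \<omega> p)"
      unfolding lined_def
    proof (intro allI impI)
      fix c q \<omega> p assume r: "inR c q \<omega> p"
      note R = reg[OF r]
      have p0: "p \<noteq> 0" "0 < norm p" using R by auto
      have "((\<lambda>t. (2/3/en c q) * norm (p + t *\<^sub>R axis i 1)) has_real_derivative (2/3/en c q) * (p $ i / norm p)) (at 0)"
        by (intro DERIV_cmult LD_norm p0)
      moreover have "(2/3/en c q) * (p $ i / norm p) = ?F2 c q \<omega> p * ?D c q \<omega> p / en c p"
        unfolding Nu_def using R p0 by (simp add: field_simps power2_eq_square)
      ultimately show "((\<lambda>t. ?F2 c q \<omega> (p + t *\<^sub>R axis i 1)) has_real_derivative ?F2 c q \<omega> p * ?D c q \<omega> p / en c p) (at 0)"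
        by simp
    qed
    moreover have "S ?D" by (intro S_mult S_u S_inv S_Nu lbnd_Nu)
    ultimately show "\<exists>D. S D \<and> lined ?F2 i (\<lambda>c q \<omega> p. ?F2 c q \<omega> p * D c q \<omega> p)" by blast
  qed
  have p1: "\<forall>c q \<omega> p. inR c q \<omega> p \<longrightarrow> 0 < ?F1 c q \<omega> p"
  proof (intro allI impI)
    fix c q \<omega> p assume r: "inR c q \<omega> p"
    show "0 < ?F1 c q \<omega> p" using reg(1,7)[OF r] by simp
  qed
  have p2: "\<forall>c q \<omega> p. inR c q \<omega> p \<longrightarrow> 0 < ?F2 c q \<omega> p"
  proof (intro allI impI)
    fix c q \<omega> p assume r: "inR c q \<omega> p"
    note R = reg[OF r]
    have "0 < norm p" using R by linarith
    thus "0 < ?F2 c q \<omega> p" using R by simp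
  qed
  show "S ?E"
    by (intro S_mult S_add S_num S_chi[OF ok p1 d1] S_chi[OF ok p2 d2])
  show "\<forall>c q \<omega> p. inR c q \<omega> p \<longrightarrow> ?E c q \<omega> p = chiAc chi c p q"
    unfolding chiAc_def by simp
qed

lemma form_vphi:
  assumes ok: "chiok chi"
  shows "form_s (\<lambda>c q \<omega>. c) (\<lambda>c q \<omega> p. vphi c p q * chiAc chi c p q)"
  unfolding form_s_def
proof (intro exI conjI)
  show "S (\<lambda>c q \<omega> p. ((1/4) * (sqrt (G2 c q \<omega> p) * sqrt (S2 c q \<omega> p))) * chiAc chi c p q)"
    by (intro S_mult S_num S_sqrt S_G2 S_S2 lbnd_G2 lbnd_S2 S_chiAc ok)
  show "\<forall>c q \<omega> p. inR c q \<omega> p \<longrightarrow> vphi c p q * chiAc chi c p q =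
      c * ((1/4) * (sqrt (G2 c q \<omega> p) * sqrt (S2 c q \<omega> p)) * chiAc chi c p q)"
    using vphi_eq by simp
qed

definition gPn :: fam where "gPn c q \<omega> p = ggg c p q / en c p"
definition gGn :: fam where "gGn c q \<omega> p = ggg c p q / en c p * gamma0 c p q"
definition Nv :: fam where "Nv c q \<omega> p = norm (p + q) ^ 2 / en c p ^ 2"
definition Wn :: "3 \<Rightarrow> fam" where "Wn j c q \<omega> p = ((p + q) \<bullet> \<omega>) / norm (p + q) ^ 2 * (p + q) $ j"

lemma S_gPn: "S gPn"
proof (rule S_cong)
  let ?E = "\<lambda>c q \<omega> p. sqrt (G2 c q \<omega> p) * (sqrt (en c q) * en c p powr (-1/2))"
  show "S ?E" by (intro S_mult S_sqrt S_G2 lbnd_G2 S_sqQP)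
  show "\<forall>c q \<omega> p. inR c q \<omega> p \<longrightarrow> ?E c q \<omega> p = gPn c q \<omega> p"
  proof (intro allI impI)
    fix c q \<omega> p assume r: "inR c q \<omega> p"
    note R = reg[OF r]
    have e: "en c p powr (-1/2) = 1 / sqrt (en c p)"
      using R(7) by (rule powr_mhalf)
    have s: "sqrt (en c p) * sqrt (en c p) = en c p" using R by simp
    show "?E c q \<omega> p = gPn c q \<omega> p" unfolding gPn_def ggg_eq[OF r] e real_sqrt_mult
      using R s by (simp add: field_simps)
  qed
qed

lemma S_gGn: "S gGn"
proof (rule S_cong)
  let ?E = "\<lambda>c q \<omega> p. sqrt (G2 c q \<omega> p) * inverse (sqrt (S2 c q \<omega> p)) * (1 + en c q * en c p powr -1)"
  show "S ?E" by (intro S_mult S_add S_num S_sqrt S_inv S_G2 lbnd_G2 S_S2 lbnd_S2 lbnd_sqrt S_QP)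
  show "\<forall>c q \<omega> p. inR c q \<omega> p \<longrightarrow> ?E c q \<omega> p = gGn c q \<omega> p"
  proof (intro allI impI)
    fix c q \<omega> p assume r: "inR c q \<omega> p"
    note R = reg[OF r]
    have s: "sqrt (en c p * en c q) > 0" using R by simp
    have s2: "sqrt (S2 c q \<omega> p) > 0" using S2_pos[OF r] by simp
    show "?E c q \<omega> p = gGn c q \<omega> p" unfolding gGn_def gamma0_def ggg_eq[OF r] sss_eq[OF r] real_sqrt_mult[of "G2 c q \<omega> p"] real_sqrt_mult[of "S2 c q \<omega> p"]
      using R s s2 by (simp add: powr_neg_one field_simps)
  qed
qed

lemma S_Nv: "S Nv"
proof (rule S_cong)
  let ?E = "\<lambda>c q \<omega> p. \<Sum>j\<in>UNIV. (p $ j / en c p + q $ j * en c p powr -1) * (p $ j / en c p + q $ j * en c p powr -1)"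
  show "S ?E" by (intro S_sum S_mult S_add S_u S_qP)
  show "\<forall>c q \<omega> p. inR c q \<omega> p \<longrightarrow> ?E c q \<omega> p = Nv c q \<omega> p"
  proof (intro allI impI)
    fix c q \<omega> p assume r: "inR c q \<omega> p"
    note R = reg[OF r]
    have "?E c q \<omega> p = (\<Sum>j\<in>UNIV. (p + q) $ j * (p + q) $ j / (en c p * en c p))"
      using R by (intro sum.cong) (auto simp: powr_neg_one field_simps)
    also have "\<dots> = ((p + q) \<bullet> (p + q)) / (en c p * en c p)"
      unfolding inner_sum3 sum_divide_distrib by simp
    finally show "?E c q \<omega> p = Nv c q \<omega> p" unfolding Nv_def by (simp add: dot_square_norm power2_eq_square)
  qed
qed

lemma lbnd_Nv: "lbnd Nv"
  unfolding lbnd_def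
proof (intro exI[of _ "1/25"] conjI exI[of _ 0] allI impI)
  fix c q \<omega> p assume r: "inR c q \<omega> p"
  note R = reg[OF r]
  have "norm p - norm q \<le> norm (p + q)" by (metis norm_diff_ineq norm_minus_cancel diff_minus_eq_add)
  hence "1/5 * en c p \<le> norm (p + q)" using R by linarith
  hence "(1/5 * en c p)^2 \<le> norm (p + q) ^2" by (rule power_mono) (use R in auto)
  thus "1/25 / jbr q ^ 0 \<le> Nv c q \<omega> p" unfolding Nv_def using R
    by (simp add: field_simps power2_eq_square)
qed simp

lemma S_Wn: "S (Wn j)"
proof (rule S_cong)
  let ?v = "\<lambda>c q p k. p $ k / en c p + q $ k * en c p powr -1"
  let ?E = "\<lambda>c q \<omega> p. (\<Sum>k\<in>UNIV. ?v c q p k * \<omega> $ k) * ?v c q p j * inverse (Nv c q \<omega> p)"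
  show "S ?E" by (intro S_sum S_mult S_add S_u S_qP S_om S_inv S_Nv lbnd_Nv)
  show "\<forall>c q \<omega> p. inR c q \<omega> p \<longrightarrow> ?E c q \<omega> p = Wn j c q \<omega> p"
  proof (intro allI impI)
    fix c q \<omega> p assume r: "inR c q \<omega> p"
    note R = reg[OF r]
    have v: "?v c q p k = (p + q) $ k / en c p" for k using R by (simp add: powr_neg_one add_divide_distrib)
    have se: "(\<Sum>k\<in>UNIV. ?v c q p k * \<omega> $ k) = ((p + q) \<bullet> \<omega>) / en c p"
    proof -
      have "(\<Sum>k\<in>UNIV. ?v c q p k * \<omega> $ k) = (\<Sum>k\<in>UNIV. (p + q) $ k * \<omega> $ k / en c p)"
        by (rule sum.cong) (simp_all only: v times_divide_eq_left)
      also have "\<dots> = (\<Sum>k\<in>UNIV. (p + q) $ k * \<omega> $ k) / en c p" by (rule sum_divide_distrib[symmetric])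
      also have "\<dots> = ((p + q) \<bullet> \<omega>) / en c p" by (simp only: inner_sum3)
      finally show ?thesis .
    qed
    have n0: "norm (p + q) \<noteq> 0" using lbnd_pos[OF lbnd_Nv r] unfolding Nv_def by auto
    have P0: "en c p \<noteq> 0" using R by simp
    show "?E c q \<omega> p = Wn j c q \<omega> p" unfolding se v[of j] Wn_def Nv_def using n0 P0
      by (simp add: field_simps power2_eq_square)
  qed
qed

lemma post_alg: "(xP::real) \<noteq> 0 \<Longrightarrow> (xN::real) \<noteq> 0 \<Longrightarrow> 1/2*(xa+xb) + xg/2*(xw + (xG-1)*xs/xN*(xa+xb)) = 1/2*xb + xP*(1/2*(xa/xP) + 1/2*(xg/xP*xw) + 1/2*((xg/xP*xG - xg/xP)*(xs/xN*(xa+xb))))"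
  by (simp add: field_simps)
lemma post_alg2: "(xP::real) \<noteq> 0 \<Longrightarrow> (xN::real) \<noteq> 0 \<Longrightarrow> 1/2*(xa+xb) - xg/2*(xw + (xG-1)*xs/xN*(xa+xb)) = 1/2*xb + xP*(1/2*(xa/xP) - 1/2*(xg/xP*xw) - 1/2*((xg/xP*xG - xg/xP)*(xs/xN*(xa+xb))))"
  by (simp add: field_simps)

lemma formv_post:
  "formv1 (\<lambda>c q \<omega> p. ppost c p q \<omega>)" "formv1 (\<lambda>c q \<omega> p. qpost c p q \<omega>)"
proof -
  let ?Zp = "\<lambda>c q \<omega> p. (\<chi> j. 1/2 * (p $ j / en c p) + 1/2 * (gPn c q \<omega> p * \<omega> $ j) + 1/2 * ((gGn c q \<omega> p - gPn c q \<omega> p) * Wn j c q \<omega> p))"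
  let ?Zq = "\<lambda>c q \<omega> p. (\<chi> j. 1/2 * (p $ j / en c p) - 1/2 * (gPn c q \<omega> p * \<omega> $ j) - 1/2 * ((gGn c q \<omega> p - gPn c q \<omega> p) * Wn j c q \<omega> p))"
  have Sp: "\<forall>j. S (\<lambda>c q \<omega> p. ?Zp c q \<omega> p $ j)"
  proof
    fix j
    have "S (\<lambda>c q \<omega> p. 1/2 * (p $ j / en c p) + 1/2 * (gPn c q \<omega> p * \<omega> $ j) + 1/2 * ((gGn c q \<omega> p - gPn c q \<omega> p) * Wn j c q \<omega> p))"
      by (intro S_add S_mult S_diff S_num S_u S_gPn S_gGn S_om S_Wn)
    thus "S (\<lambda>c q \<omega> p. ?Zp c q \<omega> p $ j)" by simp
  qed
  have Sq: "\<forall>j. S (\<lambda>c q \<omega> p. ?Zq c q \<omega> p $ j)"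
  proof
    fix j
    have "S (\<lambda>c q \<omega> p. 1/2 * (p $ j / en c p) - 1/2 * (gPn c q \<omega> p * \<omega> $ j) - 1/2 * ((gGn c q \<omega> p - gPn c q \<omega> p) * Wn j c q \<omega> p))"
      by (intro S_add S_mult S_diff S_num S_u S_gPn S_gGn S_om S_Wn)
    thus "S (\<lambda>c q \<omega> p. ?Zq c q \<omega> p $ j)" by simp
  qed
  have ep: "ppost c p q \<omega> = (1/2) *\<^sub>R q + en c p *\<^sub>R ?Zp c q \<omega> p" if r: "inR c q \<omega> p" for c q \<omega> p
  proof -
    have P: "en c p \<noteq> 0" using reg[OF r] by simp
    have n0: "norm (p + q) \<noteq> 0" using lbnd_pos[OF lbnd_Nv r] unfolding Nv_def by auto
    hence n2: "norm (p + q) ^ 2 \<noteq> 0" by simp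
    show ?thesis unfolding vec_eq_iff ppost_def dirv_def gPn_def gGn_def Wn_def
      apply (intro allI)
      apply (simp only: vector_add_component vector_scaleR_component vector_minus_component vec_lambda_beta real_scaleR_def)
      apply (rule post_alg[OF P n2])
      done
  qed
  have eq: "qpost c p q \<omega> = (1/2) *\<^sub>R q + en c p *\<^sub>R ?Zq c q \<omega> p" if r: "inR c q \<omega> p" for c q \<omega> p
  proof -
    have P: "en c p \<noteq> 0" using reg[OF r] by simp
    have n0: "norm (p + q) \<noteq> 0" using lbnd_pos[OF lbnd_Nv r] unfolding Nv_def by auto
    hence n2: "norm (p + q) ^ 2 \<noteq> 0" by simp
    show ?thesis unfolding vec_eq_iff qpost_def dirv_def gPn_def gGn_def Wn_def
      apply (intro allI)
      apply (simp only: vector_add_component vector_scaleR_component vector_minus_component vec_lambda_beta real_scaleR_def)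
      apply (rule post_alg2[OF P n2])
      done
  qed
  show "formv1 (\<lambda>c q \<omega> p. ppost c p q \<omega>)" unfolding formv1_def
    by (rule exI[of _ "\<lambda>c q \<omega>. (1/2) *\<^sub>R q"], rule exI[of _ ?Zp]) (use Sp ep in blast)
  show "formv1 (\<lambda>c q \<omega> p. qpost c p q \<omega>)" unfolding formv1_def
    by (rule exI[of _ "\<lambda>c q \<omega>. (1/2) *\<^sub>R q"], rule exI[of _ ?Zq]) (use Sq eq in blast)
qed

lemma bndf_abs: "bndf F \<Longrightarrow> bndf (\<lambda>c q \<omega> p. \<bar>F c q \<omega> p\<bar>)"
  unfolding bndf_def by simp

lemma bndf_sum: "(\<And>j. bndf (F j)) \<Longrightarrow> bndf (\<lambda>c q \<omega> p. \<Sum>j\<in>(I::'b set). F j c q \<omega> p)"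
proof (induction I rule: infinite_finite_induct)
  case (infinite A) then show ?case by (simp add: bndf_const[of _ 0])
next
  case empty then show ?case by (simp add: bndf_const[of _ 0])
next
  case (insert x F) then show ?case by (simp add: bndf_add)
qed

lemma vec_bound:
  assumes "\<forall>j. S (\<lambda>c q \<omega> p. Z c q \<omega> p $ j)"
  shows "\<exists>C>0. \<exists>n. \<forall>c q \<omega> p. inR c q \<omega> p \<longrightarrow> norm (Z c q \<omega> p) \<le> C * jbr q ^ n"
proof -
  have "bndf (\<lambda>c q \<omega> p. \<Sum>j\<in>UNIV. \<bar>Z c q \<omega> p $ j\<bar>)"
    using assms by (intro bndf_sum bndf_abs S_bndf) auto
  then obtain C n where C: "C > 0" "\<forall>c q \<omega> p. inR c q \<omega> p \<longrightarrow> \<bar>\<Sum>j\<in>UNIV. \<bar>Z c q \<omega> p $ j\<bar>\<bar> \<le> C * jbr q ^ n"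
    unfolding bndf_def by blast
  have "\<forall>c q \<omega> p. inR c q \<omega> p \<longrightarrow> norm (Z c q \<omega> p) \<le> C * jbr q ^ n"
  proof (intro allI impI)
    fix c q \<omega> p assume r: "inR c q \<omega> p"
    have "norm (Z c q \<omega> p) \<le> (\<Sum>j\<in>UNIV. \<bar>Z c q \<omega> p $ j\<bar>)" by (rule norm_le_l1_cart)
    also have "\<dots> \<le> \<bar>\<Sum>j\<in>UNIV. \<bar>Z c q \<omega> p $ j\<bar>\<bar>" by simp
    also have "\<dots> \<le> C * jbr q ^ n" using C r by blast
    finally show "norm (Z c q \<omega> p) \<le> C * jbr q ^ n" .
  qed
  thus ?thesis using C by blast
qed

lemma jpow_mono: "k \<le> N \<Longrightarrow> jbr q ^ k \<le> jbr q ^ N"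
  using jbr_ge1[of q] by (rule power_increasing[rotated])

theorem lemmaA3:
  fixes chi :: "real \<Rightarrow> real" and \<beta> :: "3 \<Rightarrow> nat"
  assumes smooth: "\<forall>k x. x > 0 \<longrightarrow> ((deriv ^^ k) chi) differentiable (at x)"
    and bnd: "\<forall>r\<ge>0. 0 \<le> chi r \<and> chi r \<le> 1"
    and one: "\<forall>r. 0 \<le> r \<and> r \<le> 1 \<longrightarrow> chi r = 1"
    and zero: "\<forall>r>2. chi r = 0"
    and beta: "\<beta> \<noteq> (\<lambda>_. 0)"
  shows "\<exists>n::nat. n \<ge> 1 \<and> (\<exists>C>0. \<forall>c p q \<omega>.
           c \<ge> 1 \<longrightarrow> norm p \<ge> 3/2 * en c q \<longrightarrow> norm \<omega> = 1 \<longrightarrow>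
           \<bar>pdiffs \<beta> (\<lambda>p. vphi c p q * chiAc chi c p q) p\<bar> / \<bar>vphi c p q\<bar>
           + norm (pdiffs \<beta> (\<lambda>p. ppost c p q \<omega>) p)
           + norm (pdiffs \<beta> (\<lambda>p. qpost c p q \<omega>) p)
           \<le> C * jbr q ^ n)"
proof -
  have ok: "chiok chi" by (rule chiok_from[OF smooth bnd one zero])
  obtain F where F: "S F" "\<forall>c q \<omega> p. inR c q \<omega> p \<longrightarrow>
      pdiffs \<beta> (\<lambda>p. vphi c p q * chiAc chi c p q) p = c * F c q \<omega> p"
    using form_s_pdiffs[OF form_vphi[OF ok], of \<beta>] unfolding form_s_def by blast
  obtain C1 n1 where C1: "C1 > 0" "\<forall>c q \<omega> p. inR c q \<omega> p \<longrightarrow> \<bar>F c q \<omega> p\<bar> \<le> C1 * jbr q ^ n1"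
    using S_bndf[OF F(1)] unfolding bndf_def by blast
  have "lbnd (\<lambda>c q \<omega> p. sqrt (G2 c q \<omega> p) * sqrt (S2 c q \<omega> p))"
    by (intro lbnd_mult lbnd_sqrt lbnd_G2 lbnd_S2)
  then obtain d m where d: "d > 0" "\<forall>c q \<omega> p. inR c q \<omega> p \<longrightarrow> d / jbr q ^ m \<le> sqrt (G2 c q \<omega> p) * sqrt (S2 c q \<omega> p)"
    unfolding lbnd_def by blast
  obtain Zp where Zp: "\<forall>j. S (\<lambda>c q \<omega> p. Zp c q \<omega> p $ j)"
      "\<forall>c q \<omega> p. inR c q \<omega> p \<longrightarrow> pdiffs \<beta> (\<lambda>p. ppost c p q \<omega>) p = Zp c q \<omega> p"
    using formv_pdiffs[OF formv_post(1) beta] unfolding formv0_def by blast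
  obtain Zq where Zq: "\<forall>j. S (\<lambda>c q \<omega> p. Zq c q \<omega> p $ j)"
      "\<forall>c q \<omega> p. inR c q \<omega> p \<longrightarrow> pdiffs \<beta> (\<lambda>p. qpost c p q \<omega>) p = Zq c q \<omega> p"
    using formv_pdiffs[OF formv_post(2) beta] unfolding formv0_def by blast
  obtain C2 n2 where C2: "C2 > 0" "\<forall>c q \<omega> p. inR c q \<omega> p \<longrightarrow> norm (Zp c q \<omega> p) \<le> C2 * jbr q ^ n2"
    using vec_bound[OF Zp(1)] by blast
  obtain C3 n3 where C3: "C3 > 0" "\<forall>c q \<omega> p. inR c q \<omega> p \<longrightarrow> norm (Zq c q \<omega> p) \<le> C3 * jbr q ^ n3"
    using vec_bound[OF Zq(1)] by blast
  define N where "N = n1 + m + n2 + n3 + 1"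
  define C where "C = 4 * C1 / d + C2 + C3"
  show ?thesis
  proof (intro exI[of _ N] conjI exI[of _ C] allI impI)
    show "1 \<le> N" unfolding N_def by simp
    show "0 < C" unfolding C_def using C1 C2 C3 d by (simp add: add_pos_pos)
    fix c :: real and p q \<omega> :: vec3
    assume c: "1 \<le> c" and pq: "3/2 * en c q \<le> norm p" and om: "norm \<omega> = 1"
    have r: "inR c q \<omega> p" unfolding inR_def using c pq om en_pos[OF c, of q] by auto
    have w1: "1 \<le> jbr q" by (rule jbr_ge1)
    have wp: "0 < jbr q ^ k" for k using w1 by simp
    let ?V = "sqrt (G2 c q \<omega> p) * sqrt (S2 c q \<omega> p)"
    have V: "d / jbr q ^ m \<le> ?V" using d r by blast
    have dpos: "0 < d / jbr q ^ m" using d wp by simp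
    have Vpos: "0 < ?V" using V dpos by linarith
    have t1: "\<bar>pdiffs \<beta> (\<lambda>p. vphi c p q * chiAc chi c p q) p\<bar> / \<bar>vphi c p q\<bar> \<le> (4 * C1 / d) * jbr q ^ N"
    proof -
      have "\<bar>pdiffs \<beta> (\<lambda>p. vphi c p q * chiAc chi c p q) p\<bar> / \<bar>vphi c p q\<bar>
          = \<bar>c * F c q \<omega> p\<bar> / \<bar>c * (1/4 * ?V)\<bar>"
      proof -
        have e1: "pdiffs \<beta> (\<lambda>p. vphi c p q * chiAc chi c p q) p = c * F c q \<omega> p" using F(2) r by blast
        have e2: "vphi c p q = c * (1/4 * ?V)" using vphi_eq[OF r] by simp
        show ?thesis by (simp only: e1 e2)
      qed
      also have "\<dots> = 4 * \<bar>F c q \<omega> p\<bar> / ?V"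
      proof -
        have a1: "\<bar>c * (1/4 * ?V)\<bar> = c * (1/4 * ?V)" using c Vpos by simp
        have a2: "\<bar>c * F c q \<omega> p\<bar> = c * \<bar>F c q \<omega> p\<bar>" using c by (simp add: abs_mult)
        have c0: "c \<noteq> 0" using c by simp
        show ?thesis unfolding a1 a2 using c0 Vpos by (simp add: field_simps)
      qed
      also have "\<dots> \<le> 4 * \<bar>F c q \<omega> p\<bar> / (d / jbr q ^ m)"
        by (rule divide_left_mono[OF V _ mult_pos_pos[OF Vpos dpos]]) simp
      also have "\<dots> = (4 / d) * (\<bar>F c q \<omega> p\<bar> * jbr q ^ m)" using d wp by (simp add: field_simps)
      also have "\<dots> \<le> (4 / d) * ((C1 * jbr q ^ n1) * jbr q ^ m)"
        using C1 r d wp by (intro mult_left_mono mult_right_mono) (auto intro: less_imp_le)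
      also have "\<dots> = (4 * C1 / d) * jbr q ^ (n1 + m)" by (simp add: power_add)
      also have "\<dots> \<le> (4 * C1 / d) * jbr q ^ N"
        using C1 d by (intro mult_left_mono jpow_mono) (auto simp: N_def)
      finally show ?thesis .
    qed
    have t2: "norm (pdiffs \<beta> (\<lambda>p. ppost c p q \<omega>) p) \<le> C2 * jbr q ^ N"
    proof -
      have "norm (pdiffs \<beta> (\<lambda>p. ppost c p q \<omega>) p) \<le> C2 * jbr q ^ n2" using Zp(2) C2(2) r by simp
      also have "\<dots> \<le> C2 * jbr q ^ N" using C2 by (intro mult_left_mono jpow_mono) (auto simp: N_def)
      finally show ?thesis .
    qed
    have t3: "norm (pdiffs \<beta> (\<lambda>p. qpost c p q \<omega>) p) \<le> C3 * jbr q ^ N"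
    proof -
      have "norm (pdiffs \<beta> (\<lambda>p. qpost c p q \<omega>) p) \<le> C3 * jbr q ^ n3" using Zq(2) C3(2) r by simp
      also have "\<dots> \<le> C3 * jbr q ^ N" using C3 by (intro mult_left_mono jpow_mono) (auto simp: N_def)
      finally show ?thesis .
    qed
    show "\<bar>pdiffs \<beta> (\<lambda>p. vphi c p q * chiAc chi c p q) p\<bar> / \<bar>vphi c p q\<bar>
           + norm (pdiffs \<beta> (\<lambda>p. ppost c p q \<omega>) p)
           + norm (pdiffs \<beta> (\<lambda>p. qpost c p q \<omega>) p)
           \<le> C * jbr q ^ N"
      using t1 t2 t3 unfolding C_def by (simp add: distrib_right)
  qed
qed

end
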